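(* Suppose Assumption 1' and the first-stage condition $E(D_{11})-E(D_{10})>E(D_{01})-E(D_{00})$, $E(D_{11})>E(D_{10})$ hold, that $D_{01}$ and $D_{00}$ have the same distribution, and that $D_{11}$ first-order stochastically dominates $D_{10}$ (i.e. $P(D_{11}\ge d)\ge P(D_{10}\ge d)$ for all $d$). Assume all expectations below are finite and well defined. Let $\mathrm{ACR}=\sum_{d=1}^{\bar d}w_d\,E\big(Y(d)-Y(d-1)\mid D(0)<d\leq D(1),\,G=1,\,T=1\big)$. Then 1. If Assumptions 3 and 4 (ordered versions) hold, $W_{DID}=\mathrm{ACR}$. 2. If Assumption 3' (ordered version) holds, $W_{TC}=\mathrm{ACR}$. 3. If Assumptions 6 and 7 (ordered versions) hold, $W_{CIC}=\mathrm{ACR}$.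
   Context: Ordered-treatment framework. Let $(Y(0),\dots,Y(\bar d),V,G,T)$ be random variables with $G\in\{0,1\}$, $T\in\{0,1\}$, $V$ real. Assumption 1': $D=\sum_{d=1}^{\bar d}1\{V\geq v^d_{GT}\}$ with real constants $-\infty=v^0_{gt}<v^1_{gt}<\dots<v^{\bar d+1}_{gt}=+\infty$, and $V$ independent of $T$ given $G$; potential treatments $D(t)=\sum_{d=1}^{\bar d}1\{V\geq v^d_{Gt}\}$; observed outcome $Y=Y(D)$. For a random variable $R$, $R_{gt}$ is distributed as $R$ given $G=g,T=t$, $R_{dgt}$ as $R$ given $D=d,G=g,T=t$; $F_R$ cdfs, $F^{-1}(q)=\inf\{x:F(x)\ge q\}$. Assumption 3: $E(Y(0)\mid G,T=1)-E(Y(0)\mid G,T=0)$ does not depend on $G$. Assumption 4: for all $d\in\{0,\dots,\bar d\}$, $E(Y(d)-Y(0)\mid G,T=1,D(0)=d)=E(Y(d)-Y(0)\mid G,T=0,D(0)=d)$. Assumption 3': for all $d$, $E(Y(d)\mid G,T=1,D(0)=d)-E(Y(d)\mid G,T=0,D(0)=d)$ does not depend on $G$. Assumption 6: for each $d$, $Y(d)=h_d(U_d,T)$, $U_d$ real, $h_d(\cdot,t)$ strictly increasing for each $t$, and $U_d$ independent of $T$ given $(G,D(0))$. Assumption 7: $\mathrm{Supp}(Y_{dgt})=\mathrm{Supp}(Y)$ for all $(d,g,t)$ in the support of $(D,G,T)$, $\mathrm{Supp}(Y)$ a closed interval, each $F_{Y_{dgt}}$ continuous on $\mathbb{R}$ and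 strictly increasing on $\mathrm{Supp}(Y)$. Definitions: $DID_R=E(R_{11})-E(R_{10})-(E(R_{01})-E(R_{00}))$, $W_{DID}=DID_Y/DID_D$; $\delta_d=E(Y_{d01})-E(Y_{d00})$, $W_{TC}=\dfrac{E(Y_{11})-E(Y+\delta_D\mid G=1,T=0)}{E(D_{11})-E(D_{10})}$; $Q_d=F^{-1}_{Y_{d01}}\circ F_{Y_{d00}}$, $W_{CIC}=\dfrac{E(Y_{11})-E(Q_D(Y)\mid G=1,T=0)}{E(D_{11})-E(D_{10})}$; $w_d=\dfrac{P(D_{11}\geq d)-P(D_{10}\geq d)}{E(D_{11})-E(D_{10})}$. *)

theory Defs
  imports "HOL-Probability.Probability"
begin

definition ev :: "'a measure \<Rightarrow> ('a \<Rightarrow> bool) \<Rightarrow> 'a set" where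
  "ev M P = {\<omega> \<in> space M. P \<omega>}"

definition pr :: "'a measure \<Rightarrow> ('a \<Rightarrow> bool) \<Rightarrow> real" where
  "pr M P = measure M (ev M P)"

text \<open>Conditional probability P(A | B) (elementary; 0 if P(B) = 0 by Isabelle's x/0 = 0).\<close>
definition cprob :: "'a measure \<Rightarrow> ('a \<Rightarrow> bool) \<Rightarrow> ('a \<Rightarrow> bool) \<Rightarrow> real" where
  "cprob M A B = pr M (\<lambda>\<omega>. A \<omega> \<and> B \<omega>) / pr M B"

definition cexp :: "'a measure \<Rightarrow> ('a \<Rightarrow> real) \<Rightarrow> ('a \<Rightarrow> bool) \<Rightarrow> real" where
  "cexp M X B = (\<integral>\<omega>. indicator (ev M B) \<omega> * X \<omega> \<partial>M) / pr M B"

definition ccdf :: "'a measure \<Rightarrow> ('a \<Rightarrow> real) \<Rightarrow> ('a \<Rightarrow> bool) \<Rightarrow> real \<Rightarrow> real" where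
  "ccdf M R B y = cprob M (\<lambda>\<omega>. R \<omega> \<le> y) B"

definition quantile :: "(real \<Rightarrow> real) \<Rightarrow> real \<Rightarrow> real" where
  "quantile F q = Inf {x. q \<le> F x}"

definition csupp :: "'a measure \<Rightarrow> ('a \<Rightarrow> real) \<Rightarrow> ('a \<Rightarrow> bool) \<Rightarrow> real set" where
  "csupp M R B = {y. \<forall>e>0. pr M (\<lambda>\<omega>. B \<omega> \<and> dist (R \<omega>) y < e) > 0}"

definition cindep :: "'a measure \<Rightarrow> ('a \<Rightarrow> real) \<Rightarrow> ('a \<Rightarrow> nat) \<Rightarrow> ('a \<Rightarrow> bool) \<Rightarrow> bool" where
  "cindep M X T C = (\<forall>A \<in> sets borel. \<forall>t.
      pr M (\<lambda>\<omega>. X \<omega> \<in> A \<and> T \<omega> = t \<and> C \<omega>) * pr M C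
        = pr M (\<lambda>\<omega>. X \<omega> \<in> A \<and> C \<omega>) * pr M (\<lambda>\<omega>. T \<omega> = t \<and> C \<omega>))"

end

theory Submission
  imports Defs
begin

context prob_space begin

lemma ev_sets[measurable]: "Measurable.pred M P \<Longrightarrow> ev M P \<in> sets M"
  unfolding ev_def by measurable

lemma pr_nonneg: "0 \<le> pr M P" by (simp add: pr_def)
lemma pr_le1: "pr M P \<le> 1" by (simp add: pr_def)

lemma pr_cong: "(\<And>\<omega>. \<omega> \<in> space M \<Longrightarrow> P \<omega> = Q \<omega>) \<Longrightarrow> pr M P = pr M Q"
  unfolding pr_def ev_def by (metis (mono_tags, lifting) Collect_cong)

lemma pr_AE: "Measurable.pred M P \<Longrightarrow> Measurable.pred M Q \<Longrightarrow> (AE \<omega> in M. P \<omega> = Q \<omega>) \<Longrightarrow> pr M P = pr M Q"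
  unfolding pr_def by (rule measure_eq_AE) (auto simp: ev_def elim!: AE_mp)

lemma pr_mono: "Measurable.pred M Q \<Longrightarrow> (\<And>\<omega>. \<omega> \<in> space M \<Longrightarrow> P \<omega> \<Longrightarrow> Q \<omega>) \<Longrightarrow> pr M P \<le> pr M Q"
  unfolding pr_def by (rule finite_measure_mono) (auto simp: ev_def)

lemma pr_mono_AE: "Measurable.pred M P \<Longrightarrow> Measurable.pred M Q \<Longrightarrow> (AE \<omega> in M. P \<omega> \<longrightarrow> Q \<omega>) \<Longrightarrow> pr M P \<le> pr M Q"
proof -
  assume a[measurable]: "Measurable.pred M P" "Measurable.pred M Q" and ae: "AE \<omega> in M. P \<omega> \<longrightarrow> Q \<omega>"
  have "pr M P = pr M (\<lambda>\<omega>. P \<omega> \<and> Q \<omega>)" by (rule pr_AE) (auto intro: AE_mp[OF ae])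
  also have "\<dots> \<le> pr M Q" by (rule pr_mono) auto
  finally show ?thesis .
qed

lemma pr_zero_AE: "Measurable.pred M P \<Longrightarrow> pr M P = 0 \<Longrightarrow> AE \<omega> in M. \<not> P \<omega>"
  unfolding pr_def
  by (rule AE_I'[of "ev M P"]) (auto simp: ev_def emeasure_eq_measure null_sets_def)

lemma AE_pr_zero: "Measurable.pred M P \<Longrightarrow> (AE \<omega> in M. \<not> P \<omega>) \<Longrightarrow> pr M P = 0"
proof -
  assume [measurable]: "Measurable.pred M P" and "AE \<omega> in M. \<not> P \<omega>"
  then have "pr M P = pr M (\<lambda>_. False)" by (intro pr_AE) auto
  then show ?thesis by (simp add: pr_def ev_def)
qed

lemma pr_int: "Measurable.pred M P \<Longrightarrow> pr M P = (\<integral>\<omega>. indicator (ev M P) \<omega> \<partial>M)"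
  by (simp add: pr_def ev_def)

lemma int_cexp: assumes [measurable]: "Measurable.pred M B"
  shows "(\<integral>\<omega>. indicator (ev M B) \<omega> * X \<omega> \<partial>M) = cexp M X B * pr M B"
proof (cases "pr M B = 0")
  case True
  then have "AE \<omega> in M. \<not> B \<omega>" by (intro pr_zero_AE) auto
  then have "AE \<omega> in M. indicator (ev M B) \<omega> * X \<omega> = 0"
    by (auto simp: ev_def indicator_def elim!: AE_mp)
  then show ?thesis using True by (simp add: integral_eq_zero_AE)
next
  case False then show ?thesis by (simp add: cexp_def)
qed

end

context prob_space begin

lemma cindep_pr:
  assumes "cindep M X T C" "{x. P x} \<in> sets borel"
  shows "pr M (\<lambda>\<omega>. P (X \<omega>) \<and> T \<omega> = t \<and> C \<omega>) * pr M C
       = pr M (\<lambda>\<omega>. P (X \<omega>) \<and> C \<omega>) * pr M (\<lambda>\<omega>. T \<omega> = t \<and> C \<omega>)"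
  using assms unfolding cindep_def by (auto dest!: bspec[of _ _ "{x. P x}"])

lemma pr_density_distr:
  assumes [measurable]: "X \<in> borel_measurable M" "Measurable.pred M S" "A \<in> sets borel"
  shows "emeasure (distr (density M (\<lambda>x. ennreal (indicator (ev M S) x))) borel X) A = ennreal (pr M (\<lambda>\<omega>. X \<omega> \<in> A \<and> S \<omega>))"
proof -
  have "emeasure (distr (density M (\<lambda>x. ennreal (indicator (ev M S) x))) borel X) A
      = emeasure (density M (\<lambda>x. ennreal (indicator (ev M S) x))) (X -` A \<inter> space M)"
    by (subst emeasure_distr) auto
  also have "\<dots> = (\<integral>\<^sup>+ x. ennreal (indicator (ev M S) x) * indicator (X -` A \<inter> space M) x \<partial>M)"
    by (subst emeasure_density) auto
  also have "\<dots> = (\<integral>\<^sup>+ x. indicator (ev M (\<lambda>\<omega>. X \<omega> \<in> A \<and> S \<omega>)) x \<partial>M)"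
    by (intro nn_integral_cong) (auto simp: ev_def indicator_def)
  also have "\<dots> = emeasure M (ev M (\<lambda>\<omega>. X \<omega> \<in> A \<and> S \<omega>))"
    by (intro nn_integral_indicator) measurable
  also have "\<dots> = ennreal (pr M (\<lambda>\<omega>. X \<omega> \<in> A \<and> S \<omega>))"
    by (simp add: pr_def emeasure_eq_measure)
  finally show ?thesis .
qed

lemma int_density_distr:
  fixes f :: "real \<Rightarrow> real"
  assumes [measurable]: "X \<in> borel_measurable M" "Measurable.pred M S" "f \<in> borel_measurable borel"
  shows "integral\<^sup>L (distr (density M (\<lambda>x. ennreal (indicator (ev M S) x))) borel X) f
     = (\<integral>\<omega>. indicator (ev M S) \<omega> * f (X \<omega>) \<partial>M)"
proof -
  have "integral\<^sup>L (distr (density M (\<lambda>x. ennreal (indicator (ev M S) x))) borel X) f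
      = integral\<^sup>L (density M (\<lambda>x. ennreal (indicator (ev M S) x))) (\<lambda>x. f (X x))"
    by (rule Bochner_Integration.integral_distr) auto
  also have "\<dots> = (\<integral>\<omega>. indicator (ev M S) \<omega> * f (X \<omega>) \<partial>M)"
    by (subst integral_density) auto
  finally show ?thesis .
qed

lemma cindep_transfer:
  fixes f :: "real \<Rightarrow> real"
  assumes ci: "cindep M X T C" and [measurable]: "X \<in> borel_measurable M" "Measurable.pred M C"
    "T \<in> measurable M (count_space UNIV)" "f \<in> borel_measurable borel"
  shows "(\<integral>\<omega>. indicator (ev M (\<lambda>\<omega>. T \<omega> = t \<and> C \<omega>)) \<omega> * f (X \<omega>) \<partial>M) * pr M (\<lambda>\<omega>. T \<omega> = s \<and> C \<omega>)
       = (\<integral>\<omega>. indicator (ev M (\<lambda>\<omega>. T \<omega> = s \<and> C \<omega>)) \<omega> * f (X \<omega>) \<partial>M) * pr M (\<lambda>\<omega>. T \<omega> = t \<and> C \<omega>)"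
proof -
  define \<nu> where "\<nu> r = distr (density M (\<lambda>x. ennreal (indicator (ev M (\<lambda>\<omega>. T \<omega> = r \<and> C \<omega>)) x))) borel X" for r
  define p where "p r = pr M (\<lambda>\<omega>. T \<omega> = r \<and> C \<omega>)" for r
  have p0: "0 \<le> p r" for r by (simp add: p_def pr_nonneg)
  have em: "emeasure (\<nu> r) A = ennreal (pr M (\<lambda>\<omega>. X \<omega> \<in> A \<and> T \<omega> = r \<and> C \<omega>))" if "A \<in> sets borel" for r A
    unfolding \<nu>_def using that by (subst pr_density_distr) auto
  have key: "pr M (\<lambda>\<omega>. X \<omega> \<in> A \<and> T \<omega> = t \<and> C \<omega>) * p s = pr M (\<lambda>\<omega>. X \<omega> \<in> A \<and> T \<omega> = s \<and> C \<omega>) * p t"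
    if A[measurable]: "A \<in> sets borel" for A
  proof (cases "pr M C = 0")
    case True
    have z: "pr M (\<lambda>\<omega>. X \<omega> \<in> A \<and> T \<omega> = r \<and> C \<omega>) = 0" for r
      using pr_mono[of C "\<lambda>\<omega>. X \<omega> \<in> A \<and> T \<omega> = r \<and> C \<omega>"] True pr_nonneg[of "\<lambda>\<omega>. X \<omega> \<in> A \<and> T \<omega> = r \<and> C \<omega>"] by auto
    show ?thesis by (simp add: z)
  next
    case False
    then have pos: "pr M C > 0" using pr_nonneg[of C] by auto
    have e: "pr M (\<lambda>\<omega>. X \<omega> \<in> A \<and> T \<omega> = r \<and> C \<omega>) * pr M C = pr M (\<lambda>\<omega>. X \<omega> \<in> A \<and> C \<omega>) * p r" for r
      using cindep_pr[OF ci, of "\<lambda>x. x \<in> A" r] A unfolding p_def by simp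
    have "pr M (\<lambda>\<omega>. X \<omega> \<in> A \<and> T \<omega> = t \<and> C \<omega>) * p s * pr M C = pr M (\<lambda>\<omega>. X \<omega> \<in> A \<and> T \<omega> = s \<and> C \<omega>) * p t * pr M C"
      using e[of t] e[of s] by (simp add: algebra_simps)
    then show ?thesis using pos by simp
  qed
  have eqm: "density (\<nu> t) (\<lambda>_. ennreal (p s)) = density (\<nu> s) (\<lambda>_. ennreal (p t))"
  proof (rule measure_eqI)
    show "sets (density (\<nu> t) (\<lambda>_. ennreal (p s))) = sets (density (\<nu> s) (\<lambda>_. ennreal (p t)))"
      by (simp add: \<nu>_def)
    fix A assume "A \<in> sets (density (\<nu> t) (\<lambda>_. ennreal (p s)))"
    then have A: "A \<in> sets borel" by (simp add: \<nu>_def)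
    have "emeasure (density (\<nu> t) (\<lambda>_. ennreal (p s))) A = ennreal (p s) * emeasure (\<nu> t) A"
      using A by (subst emeasure_density_const) (auto simp: \<nu>_def)
    also have "\<dots> = ennreal (pr M (\<lambda>\<omega>. X \<omega> \<in> A \<and> T \<omega> = t \<and> C \<omega>) * p s)"
      using A p0 pr_nonneg by (simp add: em ennreal_mult' mult.commute)
    also have "\<dots> = ennreal (pr M (\<lambda>\<omega>. X \<omega> \<in> A \<and> T \<omega> = s \<and> C \<omega>) * p t)"
      using key[OF A] by simp
    also have "\<dots> = ennreal (p t) * emeasure (\<nu> s) A"
      using A p0 pr_nonneg by (simp add: em ennreal_mult' mult.commute)
    also have "\<dots> = emeasure (density (\<nu> s) (\<lambda>_. ennreal (p t))) A"
      using A by (subst emeasure_density_const) (auto simp: \<nu>_def)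
    finally show "emeasure (density (\<nu> t) (\<lambda>_. ennreal (p s))) A = emeasure (density (\<nu> s) (\<lambda>_. ennreal (p t))) A" .
  qed
  have I: "integral\<^sup>L (density (\<nu> r) (\<lambda>_. ennreal c)) f = c * (\<integral>\<omega>. indicator (ev M (\<lambda>\<omega>. T \<omega> = r \<and> C \<omega>)) \<omega> * f (X \<omega>) \<partial>M)"
    if "0 \<le> c" for r c
  proof -
    have "integral\<^sup>L (density (\<nu> r) (\<lambda>_. ennreal c)) f = c * integral\<^sup>L (\<nu> r) f"
      using that by (subst integral_density) (auto simp: \<nu>_def)
    also have "integral\<^sup>L (\<nu> r) f = (\<integral>\<omega>. indicator (ev M (\<lambda>\<omega>. T \<omega> = r \<and> C \<omega>)) \<omega> * f (X \<omega>) \<partial>M)"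
      unfolding \<nu>_def by (rule int_density_distr) auto
    finally show ?thesis .
  qed
  from arg_cong[OF eqm, of "\<lambda>N. integral\<^sup>L N f"] I[OF p0, of t s] I[OF p0, of s t]
  show ?thesis by (simp add: p_def mult.commute)
qed

end

lemma quantile_at:
  fixes F :: "real \<Rightarrow> real"
  assumes S: "is_interval S" "x \<in> S" and sm: "strict_mono_on S F"
    and below: "\<And>y. y \<notin> S \<Longrightarrow> y < x \<Longrightarrow> F y = 0" and pos: "F x > 0"
  shows "quantile F (F x) = x"
  unfolding quantile_def
proof (rule cInf_eq_minimum)
  show "x \<in> {y. F x \<le> F y}" by simp
  fix y assume "y \<in> {y. F x \<le> F y}"
  then have y: "F x \<le> F y" by simp
  show "x \<le> y"
  proof (rule ccontr)
    assume "\<not> x \<le> y" then have yx: "y < x" by simp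
    show False
    proof (cases "y \<in> S")
      case True then have "F y < F x" using sm S yx by (auto simp: strict_mono_on_def)
      then show False using y by simp
    next
      case False then have "F y = 0" using below yx by simp
      then show False using y pos by simp
    qed
  qed
qed

context prob_space begin

lemma pr_add: assumes [measurable]: "Measurable.pred M P" "Measurable.pred M Q"
    and dis: "\<And>\<omega>. \<omega> \<in> space M \<Longrightarrow> P \<omega> \<Longrightarrow> Q \<omega> \<Longrightarrow> False"
  shows "pr M (\<lambda>\<omega>. P \<omega> \<or> Q \<omega>) = pr M P + pr M Q"
proof -
  have "ev M (\<lambda>\<omega>. P \<omega> \<or> Q \<omega>) = ev M P \<union> ev M Q" by (auto simp: ev_def)
  moreover have "ev M P \<inter> ev M Q = {}" using dis by (auto simp: ev_def)
  ultimately show ?thesis unfolding pr_def by (simp add: finite_measure_Union)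
qed

lemma supp_AE:
  assumes [measurable]: "R \<in> borel_measurable M" "Measurable.pred M B"
  shows "AE \<omega> in M. B \<omega> \<longrightarrow> R \<omega> \<in> csupp M R B"
proof -
  define X where "X = {pq \<in> \<rat> \<times> \<rat>. pr M (\<lambda>\<omega>. B \<omega> \<and> fst pq < R \<omega> \<and> R \<omega> < snd pq) = 0}"
  have cX: "countable X" unfolding X_def
    by (rule countable_subset[of _ "\<rat> \<times> \<rat>"]) (auto intro: countable_rat)
  have "\<forall>pq\<in>X. AE \<omega> in M. \<not> (B \<omega> \<and> fst pq < R \<omega> \<and> R \<omega> < snd pq)"
  proof
    fix pq assume "pq \<in> X"
    then have "pr M (\<lambda>\<omega>. B \<omega> \<and> fst pq < R \<omega> \<and> R \<omega> < snd pq) = 0" by (simp add: X_def)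
    then show "AE \<omega> in M. \<not> (B \<omega> \<and> fst pq < R \<omega> \<and> R \<omega> < snd pq)" by (intro pr_zero_AE) auto
  qed
  then have ae: "AE \<omega> in M. \<forall>pq\<in>X. \<not> (B \<omega> \<and> fst pq < R \<omega> \<and> R \<omega> < snd pq)"
    using AE_ball_countable[OF cX, where M=M and P="\<lambda>\<omega> pq. \<not> (B \<omega> \<and> fst pq < R \<omega> \<and> R \<omega> < snd pq)"] by blast
  show ?thesis
  proof (rule AE_mp[OF ae], rule AE_I2, intro impI)
    fix \<omega> assume \<omega>: "\<omega> \<in> space M" and all: "\<forall>pq\<in>X. \<not> (B \<omega> \<and> fst pq < R \<omega> \<and> R \<omega> < snd pq)"
      and b: "B \<omega>"
    show "R \<omega> \<in> csupp M R B"
      unfolding csupp_def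
    proof (clarify, rule ccontr)
      fix e :: real assume e: "e > 0" and np: "\<not> 0 < pr M (\<lambda>\<omega>'. B \<omega>' \<and> dist (R \<omega>') (R \<omega>) < e)"
      then have z: "pr M (\<lambda>\<omega>'. B \<omega>' \<and> dist (R \<omega>') (R \<omega>) < e) = 0" using pr_nonneg[of "(\<lambda>\<omega>'. B \<omega>' \<and> dist (R \<omega>') (R \<omega>) < e)"] by simp
      obtain p where p: "p \<in> \<rat>" "R \<omega> - e < p" "p < R \<omega>" using Rats_dense_in_real[of "R \<omega> - e" "R \<omega>"] e by auto
      obtain q where q: "q \<in> \<rat>" "R \<omega> < q" "q < R \<omega> + e" using Rats_dense_in_real[of "R \<omega>" "R \<omega> + e"] e by auto
      have "pr M (\<lambda>\<omega>'. B \<omega>' \<and> p < R \<omega>' \<and> R \<omega>' < q) \<le> pr M (\<lambda>\<omega>'. B \<omega>' \<and> dist (R \<omega>') (R \<omega>) < e)"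
        using p q by (intro pr_mono) (auto simp: dist_real_def)
      then have "(p, q) \<in> X" unfolding X_def using z p q pr_nonneg[of "\<lambda>\<omega>'. B \<omega>' \<and> p < R \<omega>' \<and> R \<omega>' < q"] by auto
      then show False using all b p q by auto
    qed
  qed
qed

lemma noatom:
  assumes [measurable]: "R \<in> borel_measurable M" "Measurable.pred M B"
    and pos: "pr M B > 0" and cont: "isCont (ccdf M R B) s"
  shows "pr M (\<lambda>\<omega>. B \<omega> \<and> R \<omega> = s) = 0"
proof (rule ccontr)
  define F where "F = ccdf M R B"
  define a where "a = pr M (\<lambda>\<omega>. B \<omega> \<and> R \<omega> = s)"
  define b where "b = pr M B"
  assume "pr M (\<lambda>\<omega>. B \<omega> \<and> R \<omega> = s) \<noteq> 0"
  then have a: "a > 0" using pr_nonneg[of "\<lambda>\<omega>. B \<omega> \<and> R \<omega> = s"] by (simp add: a_def)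
  have b: "b > 0" using pos by (simp add: b_def)
  have "\<forall>r>0. \<exists>d>0. \<forall>x. x \<noteq> s \<and> norm (x - s) < d \<longrightarrow> norm (F x - F s) < r"
    using cont unfolding isCont_def LIM_eq F_def .
  then obtain d where d: "d > 0" "\<And>x. x \<noteq> s \<and> norm (x - s) < d \<Longrightarrow> norm (F x - F s) < a / b"
    using a b by (meson divide_pos_pos)
  have c1: "\<bar>F (s - d/2) - F s\<bar> < a / b" using d(1) d(2)[of "s - d/2"] by simp
  have "pr M (\<lambda>\<omega>. (B \<omega> \<and> R \<omega> = s) \<or> (R \<omega> \<le> s - d/2 \<and> B \<omega>)) = a + pr M (\<lambda>\<omega>. R \<omega> \<le> s - d/2 \<and> B \<omega>)"
    unfolding a_def using d(1) by (intro pr_add) auto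
  moreover have "pr M (\<lambda>\<omega>. (B \<omega> \<and> R \<omega> = s) \<or> (R \<omega> \<le> s - d/2 \<and> B \<omega>)) \<le> pr M (\<lambda>\<omega>. R \<omega> \<le> s \<and> B \<omega>)"
    using d(1) by (intro pr_mono) auto
  ultimately have c2: "a \<le> F s * b - F (s - d/2) * b"
    using b unfolding F_def ccdf_def cprob_def b_def by simp
  have "F s - F (s - d/2) < a / b" using c1 by simp
  then have "(F s - F (s - d/2)) * b < a" using b by (simp add: pos_less_divide_eq)
  then show False using c2 by (simp add: algebra_simps)
qed

lemma ccdf_nonneg: "0 \<le> ccdf M R B y"
  by (simp add: ccdf_def cprob_def pr_nonneg)

lemma ccdf_le1: assumes "Measurable.pred M B" shows "ccdf M R B y \<le> 1"
proof -
  have "pr M (\<lambda>\<omega>. R \<omega> \<le> y \<and> B \<omega>) \<le> pr M B" using assms by (intro pr_mono) auto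
  then show ?thesis using pr_nonneg[of B] by (cases "pr M B = 0") (auto simp: ccdf_def cprob_def divide_le_eq_1)
qed

lemma ccdf_below:
  assumes [measurable]: "R \<in> borel_measurable M" "Measurable.pred M B"
    and S: "is_interval (csupp M R B)" and y: "y \<notin> csupp M R B" "s \<in> csupp M R B" "y < s"
  shows "ccdf M R B y = 0"
proof -
  have ae: "AE \<omega> in M. B \<omega> \<longrightarrow> R \<omega> \<in> csupp M R B" by (rule supp_AE) auto
  have "AE \<omega> in M. \<not> (R \<omega> \<le> y \<and> B \<omega>)"
  proof (rule AE_mp[OF ae], rule AE_I2, safe)
    fix \<omega> assume "R \<omega> \<in> csupp M R B" "R \<omega> \<le> y"
    then have "y \<in> csupp M R B" using S y unfolding is_interval_1 by (meson less_imp_le)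
    then show False using y by simp
  qed
  then have "pr M (\<lambda>\<omega>. R \<omega> \<le> y \<and> B \<omega>) = 0" by (intro AE_pr_zero) auto
  then show ?thesis by (simp add: ccdf_def cprob_def)
qed

lemma ccdf_above:
  assumes [measurable]: "R \<in> borel_measurable M" "Measurable.pred M B" and pos: "pr M B > 0"
    and S: "is_interval (csupp M R B)" and y: "y \<notin> csupp M R B" "s \<in> csupp M R B" "s < y"
  shows "ccdf M R B y = 1"
proof -
  have ae: "AE \<omega> in M. B \<omega> \<longrightarrow> R \<omega> \<in> csupp M R B" by (rule supp_AE) auto
  have "AE \<omega> in M. (R \<omega> \<le> y \<and> B \<omega>) = B \<omega>"
  proof (rule AE_mp[OF ae], rule AE_I2, safe)
    fix \<omega> assume "R \<omega> \<in> csupp M R B" "B \<omega>"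
    show "R \<omega> \<le> y"
    proof (rule ccontr)
      assume "\<not> R \<omega> \<le> y"
      then have "y \<in> csupp M R B" using S y \<open>R \<omega> \<in> csupp M R B\<close> unfolding is_interval_1 by (meson less_imp_le not_le)
      then show False using y by simp
    qed
  qed
  then have "pr M (\<lambda>\<omega>. R \<omega> \<le> y \<and> B \<omega>) = pr M B" by (intro pr_AE) auto
  then show ?thesis using pos by (simp add: ccdf_def cprob_def)
qed

end

lemma sel_meas:
  fixes f :: "nat \<Rightarrow> 'a \<Rightarrow> real"
  assumes K: "K \<in> measurable M (count_space UNIV)" and Kle: "\<And>\<omega>. \<omega> \<in> space M \<Longrightarrow> K \<omega> \<le> n"
    and f: "\<And>k. k \<le> n \<Longrightarrow> f k \<in> borel_measurable M"
  shows "(\<lambda>\<omega>. f (K \<omega>) \<omega>) \<in> borel_measurable M"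
proof -
  have "(\<lambda>\<omega>. \<Sum>k\<in>{..n}. (if K \<omega> = k then f k \<omega> else 0)) \<in> borel_measurable M"
    using K f by (intro borel_measurable_sum) (auto intro!: measurable_If)
  moreover have "\<And>\<omega>. \<omega> \<in> space M \<Longrightarrow> (\<Sum>k\<in>{..n}. (if K \<omega> = k then f k \<omega> else 0)) = f (K \<omega>) \<omega>"
    using Kle by (simp add: sum.delta)
  ultimately show ?thesis by (simp cong: measurable_cong)
qed

locale model = prob_space M for M :: "'a measure" +
  fixes Y :: "nat \<Rightarrow> 'a \<Rightarrow> real" and V :: "'a \<Rightarrow> real" and G T :: "'a \<Rightarrow> nat"
    and v :: "nat \<Rightarrow> nat \<Rightarrow> nat \<Rightarrow> real" and dbar :: nat
  assumes G_meas[measurable]: "G \<in> measurable M (count_space UNIV)"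
    and T_meas[measurable]: "T \<in> measurable M (count_space UNIV)"
    and G01: "\<forall>\<omega>\<in>space M. G \<omega> \<le> 1"
    and T01: "\<forall>\<omega>\<in>space M. T \<omega> \<le> 1"
    and V_meas[measurable]: "V \<in> borel_measurable M"
    and Y_int: "\<forall>d\<le>dbar. integrable M (Y d)"
    and cells_pos: "\<forall>g\<le>1. \<forall>t\<le>1. pr M (\<lambda>\<omega>. G \<omega> = g \<and> T \<omega> = t) > 0"
    and v_mono: "\<forall>g t d. 1 \<le> d \<and> d < dbar \<longrightarrow> v d g t < v (Suc d) g t"
    and V_T_indep: "\<forall>g. cindep M V T (\<lambda>\<omega>. G \<omega> = g)"
begin

definition "dpf g t x = (\<Sum>d\<in>{1..dbar}. if v d g t \<le> x then 1 else 0 :: nat)"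
definition "Dp t \<omega> = (\<Sum>d\<in>{1..dbar}. if v d (G \<omega>) t \<le> V \<omega> then 1 else 0 :: nat)"
definition "D \<omega> = Dp (T \<omega>) \<omega>"
definition "Yo \<omega> = Y (D \<omega>) \<omega>"
definition "Yc \<omega> = Y (Dp 0 \<omega>) \<omega>"

lemma dpf_meas[measurable]: "dpf g t \<in> measurable borel (count_space UNIV)"
  unfolding dpf_def by measurable

lemma Dp_dpf: "Dp t \<omega> = dpf (G \<omega>) t (V \<omega>)" by (simp add: Dp_def dpf_def)

lemma Dp_meas[measurable]: "Dp t \<in> measurable M (count_space UNIV)"
  unfolding Dp_def by measurable

lemma D_meas[measurable]: "D \<in> measurable M (count_space UNIV)"
  unfolding D_def Dp_def by measurable

lemma Dp_le: "Dp t \<omega> \<le> dbar"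
proof -
  have "Dp t \<omega> \<le> (\<Sum>d\<in>{1..dbar}. 1)" unfolding Dp_def by (intro sum_mono) auto
  then show ?thesis by simp
qed

lemma D_le: "D \<omega> \<le> dbar" by (simp add: D_def Dp_le)

lemma Y_meas: "d \<le> dbar \<Longrightarrow> Y d \<in> borel_measurable M"
  using Y_int by auto

lemma Yo_meas[measurable]: "Yo \<in> borel_measurable M"
  unfolding Yo_def by (rule sel_meas[of _ _ dbar]) (auto simp: D_le Y_meas)

lemma Yc_meas[measurable]: "Yc \<in> borel_measurable M"
  unfolding Yc_def by (rule sel_meas[of _ _ dbar]) (auto simp: Dp_le Y_meas)

lemma v_le: "1 \<le> d' \<Longrightarrow> d' \<le> d \<Longrightarrow> d \<le> dbar \<Longrightarrow> v d' g t \<le> v d g t"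
proof (induction d)
  case 0 then show ?case by simp
next
  case (Suc d)
  show ?case
  proof (cases "d' = Suc d")
    case True then show ?thesis by simp
  next
    case False
    then have "v d' g t \<le> v d g t" using Suc by simp
    moreover have "v d g t < v (Suc d) g t" using v_mono Suc False by auto
    ultimately show ?thesis by simp
  qed
qed

lemma Dp_ge_iff:
  assumes d: "1 \<le> d" "d \<le> dbar"
  shows "(d \<le> Dp t \<omega>) \<longleftrightarrow> (v d (G \<omega>) t \<le> V \<omega>)"
proof
  assume h: "v d (G \<omega>) t \<le> V \<omega>"
  have "d = (\<Sum>d'\<in>{1..d}. 1::nat)" by simp
  also have "\<dots> = (\<Sum>d'\<in>{1..d}. if v d' (G \<omega>) t \<le> V \<omega> then 1 else 0 :: nat)"
  proof (intro sum.cong refl)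
    fix x assume "x \<in> {1..d}"
    then have "v x (G \<omega>) t \<le> v d (G \<omega>) t" using d by (intro v_le) auto
    then show "1 = (if v x (G \<omega>) t \<le> V \<omega> then 1 else 0 :: nat)" using h by simp
  qed
  also have "\<dots> \<le> Dp t \<omega>" unfolding Dp_def using d by (intro sum_mono2) auto
  finally show "d \<le> Dp t \<omega>" .
next
  assume h: "d \<le> Dp t \<omega>"
  show "v d (G \<omega>) t \<le> V \<omega>"
  proof (rule ccontr)
    assume n: "\<not> v d (G \<omega>) t \<le> V \<omega>"
    have "Dp t \<omega> = (\<Sum>d'\<in>{1..dbar}. if v d' (G \<omega>) t \<le> V \<omega> then 1 else 0 :: nat)" by (simp add: Dp_def)
    also have "\<dots> \<le> (\<Sum>d'\<in>{1..dbar}. if d' < d then 1 else 0 :: nat)"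
      using n v_le[of d _ "G \<omega>" t] d by (intro sum_mono) (auto simp: not_less intro: order_trans)
    also have "\<dots> = card ({1..dbar} \<inter> {d'. d' < d})" by (simp add: sum.If_cases)
    also have "{1..dbar} \<inter> {d'. d' < d} = {1..<d}" using d by auto
    finally have "Dp t \<omega> \<le> d - 1" by simp
    then show False using h d by simp
  qed
qed

end

context prob_space begin

lemma int_ind: "Measurable.pred M P \<Longrightarrow> integrable M (indicator (ev M P) :: 'a \<Rightarrow> real)"
  by (rule integrable_real_indicator) (auto simp: ev_sets less_top[symmetric])

lemma pr_sum:
  assumes I: "finite I" and [measurable]: "Measurable.pred M P" "\<And>i. i \<in> I \<Longrightarrow> Measurable.pred M (Q i)"
    and PQ: "\<And>\<omega>. \<omega> \<in> space M \<Longrightarrow> P \<omega> \<longleftrightarrow> (\<exists>i\<in>I. Q i \<omega>)"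
    and dis: "\<And>\<omega> i j. \<omega> \<in> space M \<Longrightarrow> i \<in> I \<Longrightarrow> j \<in> I \<Longrightarrow> Q i \<omega> \<Longrightarrow> Q j \<omega> \<Longrightarrow> i = j"
  shows "pr M P = (\<Sum>i\<in>I. pr M (Q i))"
proof -
  have "pr M P = (\<integral>\<omega>. indicator (ev M P) \<omega> \<partial>M)" by (rule pr_int) simp
  also have "\<dots> = (\<integral>\<omega>. (\<Sum>i\<in>I. indicator (ev M (Q i)) \<omega>) \<partial>M)"
  proof (rule Bochner_Integration.integral_cong[OF refl])
    fix \<omega> assume \<omega>: "\<omega> \<in> space M"
    show "indicator (ev M P) \<omega> = (\<Sum>i\<in>I. indicator (ev M (Q i)) \<omega> :: real)"
    proof (cases "P \<omega>")
      case True
      then obtain i where i: "i \<in> I" "Q i \<omega>" using PQ \<omega> by auto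
      have "(\<Sum>j\<in>I. indicator (ev M (Q j)) \<omega> :: real) = (\<Sum>j\<in>I. if j = i then 1 else 0)"
      proof (intro sum.cong refl)
        fix j assume j: "j \<in> I"
        have "Q j \<omega> \<longleftrightarrow> j = i" using dis[OF \<omega> i(1) j i(2)] i(2) by blast
        then show "indicator (ev M (Q j)) \<omega> = (if j = i then 1 else 0 :: real)"
          using \<omega> by (simp add: ev_def indicator_def)
      qed
      also have "\<dots> = 1" using i I by (simp add: sum.delta)
      finally show ?thesis using True \<omega> by (simp add: ev_def indicator_def)
    next
      case False
      then have "\<And>j. j \<in> I \<Longrightarrow> \<not> Q j \<omega>" using PQ \<omega> by auto
      then show ?thesis using False by (simp add: ev_def indicator_def)
    qed
  qed
  also have "\<dots> = (\<Sum>i\<in>I. (\<integral>\<omega>. indicator (ev M (Q i)) \<omega> \<partial>M))"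
    by (rule Bochner_Integration.integral_sum) (rule int_ind, simp)
  also have "\<dots> = (\<Sum>i\<in>I. pr M (Q i))" by (intro sum.cong refl) (simp add: pr_int)
  finally show ?thesis .
qed

lemma nested_AE:
  assumes [measurable]: "Measurable.pred M A" "Measurable.pred M B"
    and sub: "\<And>\<omega>. \<omega> \<in> space M \<Longrightarrow> A \<omega> \<Longrightarrow> B \<omega>" and le: "pr M B \<le> pr M A"
  shows "AE \<omega> in M. B \<omega> \<longrightarrow> A \<omega>"
proof -
  have "pr M B = pr M (\<lambda>\<omega>. A \<omega> \<or> (B \<omega> \<and> \<not> A \<omega>))" using sub by (intro pr_cong) auto
  also have "\<dots> = pr M A + pr M (\<lambda>\<omega>. B \<omega> \<and> \<not> A \<omega>)" by (intro pr_add) auto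
  finally have "pr M (\<lambda>\<omega>. B \<omega> \<and> \<not> A \<omega>) = 0" using le pr_nonneg[of "\<lambda>\<omega>. B \<omega> \<and> \<not> A \<omega>"] by simp
  then have "AE \<omega> in M. \<not> (B \<omega> \<and> \<not> A \<omega>)" by (intro pr_zero_AE) auto
  then show ?thesis by auto
qed

end

context model begin

lemma pr_G_pos: "g \<le> 1 \<Longrightarrow> pr M (\<lambda>\<omega>. G \<omega> = g) > 0"
proof -
  assume g: "g \<le> 1"
  have "pr M (\<lambda>\<omega>. G \<omega> = g \<and> T \<omega> = 0) \<le> pr M (\<lambda>\<omega>. G \<omega> = g)" by (intro pr_mono) auto
  then show ?thesis using cells_pos g by fastforce
qed

lemma cell_pos: "g \<le> 1 \<Longrightarrow> t \<le> 1 \<Longrightarrow> pr M (\<lambda>\<omega>. G \<omega> = g \<and> T \<omega> = t) > 0"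
  using cells_pos by auto

lemma V_prop:
  assumes g: "g \<le> 1" and t: "t \<le> 1"
  shows "pr M (\<lambda>\<omega>. \<Phi> (Dp s \<omega>) \<and> G \<omega> = g \<and> T \<omega> = t) / pr M (\<lambda>\<omega>. G \<omega> = g \<and> T \<omega> = t)
       = pr M (\<lambda>\<omega>. \<Phi> (Dp s \<omega>) \<and> G \<omega> = g) / pr M (\<lambda>\<omega>. G \<omega> = g)"
proof -
  have bs: "{x. \<Phi> (dpf g s x)} \<in> sets borel" by measurable
  have e: "pr M (\<lambda>\<omega>. \<Phi> (dpf g s (V \<omega>)) \<and> T \<omega> = t \<and> G \<omega> = g) * pr M (\<lambda>\<omega>. G \<omega> = g)
     = pr M (\<lambda>\<omega>. \<Phi> (dpf g s (V \<omega>)) \<and> G \<omega> = g) * pr M (\<lambda>\<omega>. T \<omega> = t \<and> G \<omega> = g)"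
    using cindep_pr[OF V_T_indep[rule_format, of g] bs] by simp
  have e1: "pr M (\<lambda>\<omega>. \<Phi> (dpf g s (V \<omega>)) \<and> T \<omega> = t \<and> G \<omega> = g) = pr M (\<lambda>\<omega>. \<Phi> (Dp s \<omega>) \<and> G \<omega> = g \<and> T \<omega> = t)"
    by (intro pr_cong) (auto simp: Dp_dpf)
  have e2: "pr M (\<lambda>\<omega>. \<Phi> (dpf g s (V \<omega>)) \<and> G \<omega> = g) = pr M (\<lambda>\<omega>. \<Phi> (Dp s \<omega>) \<and> G \<omega> = g)"
    by (intro pr_cong) (auto simp: Dp_dpf)
  have e3: "pr M (\<lambda>\<omega>. T \<omega> = t \<and> G \<omega> = g) = pr M (\<lambda>\<omega>. G \<omega> = g \<and> T \<omega> = t)"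
    by (intro pr_cong) auto
  show ?thesis using e e1 e2 e3 cell_pos[OF g t] pr_G_pos[OF g]
    by (simp add: field_simps)
qed

lemma V_prop2:
  assumes "g \<le> 1" "t \<le> 1" "t' \<le> 1"
  shows "pr M (\<lambda>\<omega>. \<Phi> (Dp s \<omega>) \<and> G \<omega> = g \<and> T \<omega> = t) / pr M (\<lambda>\<omega>. G \<omega> = g \<and> T \<omega> = t)
       = pr M (\<lambda>\<omega>. \<Phi> (Dp s \<omega>) \<and> G \<omega> = g \<and> T \<omega> = t') / pr M (\<lambda>\<omega>. G \<omega> = g \<and> T \<omega> = t')"
  using V_prop[OF assms(1,2)] V_prop[OF assms(1,3)] by simp

lemma D_T0: "T \<omega> = 0 \<Longrightarrow> D \<omega> = Dp 0 \<omega>" by (simp add: D_def)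
lemma D_T1: "T \<omega> = 1 \<Longrightarrow> D \<omega> = Dp 1 \<omega>" by (simp add: D_def)

lemma cprob_geD:
  assumes g: "g \<le> 1" and t: "t \<le> 1"
  shows "cprob M (\<lambda>\<omega>. d \<le> D \<omega>) (\<lambda>\<omega>. G \<omega> = g \<and> T \<omega> = t) = pr M (\<lambda>\<omega>. d \<le> Dp t \<omega> \<and> G \<omega> = g) / pr M (\<lambda>\<omega>. G \<omega> = g)"
proof -
  have "pr M (\<lambda>\<omega>. d \<le> D \<omega> \<and> G \<omega> = g \<and> T \<omega> = t) = pr M (\<lambda>\<omega>. d \<le> Dp t \<omega> \<and> G \<omega> = g \<and> T \<omega> = t)"
    by (intro pr_cong) (auto simp: D_def)
  then show ?thesis using V_prop[OF g t, of "\<lambda>n. d \<le> n" t] by (simp add: cprob_def)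
qed

lemma A1:
  assumes D0_same: "\<forall>k. cprob M (\<lambda>\<omega>. D \<omega> = k) (\<lambda>\<omega>. G \<omega> = 0 \<and> T \<omega> = 1)
                     = cprob M (\<lambda>\<omega>. D \<omega> = k) (\<lambda>\<omega>. G \<omega> = 0 \<and> T \<omega> = 0)"
  shows "AE \<omega> in M. G \<omega> = 0 \<longrightarrow> Dp 1 \<omega> = Dp 0 \<omega>"
proof -
  have ge: "cprob M (\<lambda>\<omega>. d \<le> D \<omega>) B = (\<Sum>k\<in>{d..dbar}. cprob M (\<lambda>\<omega>. D \<omega> = k) B)"
    if [measurable]: "Measurable.pred M B" for d B
  proof -
    have "pr M (\<lambda>\<omega>. d \<le> D \<omega> \<and> B \<omega>) = (\<Sum>k\<in>{d..dbar}. pr M (\<lambda>\<omega>. D \<omega> = k \<and> B \<omega>))"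
      by (rule pr_sum) (auto simp: D_le)
    then show ?thesis by (simp add: cprob_def sum_divide_distrib)
  qed
  have each: "AE \<omega> in M. G \<omega> = 0 \<longrightarrow> (v d 0 1 \<le> V \<omega> \<longleftrightarrow> v d 0 0 \<le> V \<omega>)" if d: "d \<in> {1..dbar}" for d
  proof -
    have "cprob M (\<lambda>\<omega>. d \<le> D \<omega>) (\<lambda>\<omega>. G \<omega> = 0 \<and> T \<omega> = 1) = cprob M (\<lambda>\<omega>. d \<le> D \<omega>) (\<lambda>\<omega>. G \<omega> = 0 \<and> T \<omega> = 0)"
      using D0_same by (simp add: ge)
    then have "pr M (\<lambda>\<omega>. d \<le> Dp 1 \<omega> \<and> G \<omega> = 0) = pr M (\<lambda>\<omega>. d \<le> Dp 0 \<omega> \<and> G \<omega> = 0)"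
      using cprob_geD[of 0 1 d] cprob_geD[of 0 0 d] pr_G_pos[of 0] by simp
    moreover have "pr M (\<lambda>\<omega>. d \<le> Dp t \<omega> \<and> G \<omega> = 0) = pr M (\<lambda>\<omega>. v d 0 t \<le> V \<omega> \<and> G \<omega> = 0)" for t
      using d by (intro pr_cong) (auto simp: Dp_ge_iff)
    ultimately have eq: "pr M (\<lambda>\<omega>. v d 0 1 \<le> V \<omega> \<and> G \<omega> = 0) = pr M (\<lambda>\<omega>. v d 0 0 \<le> V \<omega> \<and> G \<omega> = 0)" by simp
    show ?thesis
    proof (cases "v d 0 1 \<le> v d 0 0")
      case True
      have "AE \<omega> in M. (v d 0 1 \<le> V \<omega> \<and> G \<omega> = 0) \<longrightarrow> (v d 0 0 \<le> V \<omega> \<and> G \<omega> = 0)"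
        using eq True by (intro nested_AE) auto
      then show ?thesis using True by (auto elim!: AE_mp)
    next
      case False
      have "AE \<omega> in M. (v d 0 0 \<le> V \<omega> \<and> G \<omega> = 0) \<longrightarrow> (v d 0 1 \<le> V \<omega> \<and> G \<omega> = 0)"
        using eq False by (intro nested_AE) auto
      then show ?thesis using False by (auto elim!: AE_mp)
    qed
  qed
  have "AE \<omega> in M. \<forall>d\<in>{1..dbar}. G \<omega> = 0 \<longrightarrow> (v d 0 1 \<le> V \<omega> \<longleftrightarrow> v d 0 0 \<le> V \<omega>)"
    by (rule AE_finite_allI[OF finite_atLeastAtMost]) (rule each)
  then show ?thesis
  proof (rule AE_mp, intro AE_I2 impI)
    fix \<omega> assume h: "\<forall>d\<in>{1..dbar}. G \<omega> = 0 \<longrightarrow> (v d 0 1 \<le> V \<omega> \<longleftrightarrow> v d 0 0 \<le> V \<omega>)" and g: "G \<omega> = 0"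
    show "Dp 1 \<omega> = Dp 0 \<omega>" unfolding Dp_def using h g by (intro sum.cong) auto
  qed
qed

lemma A2:
  assumes dom: "\<forall>d. cprob M (\<lambda>\<omega>. d \<le> D \<omega>) (\<lambda>\<omega>. G \<omega> = 1 \<and> T \<omega> = 1)
                     \<ge> cprob M (\<lambda>\<omega>. d \<le> D \<omega>) (\<lambda>\<omega>. G \<omega> = 1 \<and> T \<omega> = 0)"
  shows "AE \<omega> in M. G \<omega> = 1 \<longrightarrow> Dp 0 \<omega> \<le> Dp 1 \<omega>"
proof -
  have each: "AE \<omega> in M. G \<omega> = 1 \<longrightarrow> v d 1 0 \<le> V \<omega> \<longrightarrow> v d 1 1 \<le> V \<omega>" if d: "d \<in> {1..dbar}" for d
  proof -
    have "pr M (\<lambda>\<omega>. d \<le> Dp 1 \<omega> \<and> G \<omega> = 1) \<ge> pr M (\<lambda>\<omega>. d \<le> Dp 0 \<omega> \<and> G \<omega> = 1)"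
    proof -
      have "pr M (\<lambda>\<omega>. d \<le> Dp 0 \<omega> \<and> G \<omega> = 1) / pr M (\<lambda>\<omega>. G \<omega> = 1) \<le> pr M (\<lambda>\<omega>. d \<le> Dp 1 \<omega> \<and> G \<omega> = 1) / pr M (\<lambda>\<omega>. G \<omega> = 1)"
        using dom[rule_format, of d] cprob_geD[of 1 1 d] cprob_geD[of 1 0 d] by simp
      then show ?thesis using pr_G_pos[of 1] by (subst (asm) divide_le_cancel) simp
    qed
    moreover have "pr M (\<lambda>\<omega>. d \<le> Dp t \<omega> \<and> G \<omega> = 1) = pr M (\<lambda>\<omega>. v d 1 t \<le> V \<omega> \<and> G \<omega> = 1)" for t
      using d by (intro pr_cong) (auto simp: Dp_ge_iff)
    ultimately have le: "pr M (\<lambda>\<omega>. v d 1 0 \<le> V \<omega> \<and> G \<omega> = 1) \<le> pr M (\<lambda>\<omega>. v d 1 1 \<le> V \<omega> \<and> G \<omega> = 1)" by simp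
    show ?thesis
    proof (cases "v d 1 1 \<le> v d 1 0")
      case True then show ?thesis by (intro AE_I2) auto
    next
      case False
      have "AE \<omega> in M. (v d 1 0 \<le> V \<omega> \<and> G \<omega> = 1) \<longrightarrow> (v d 1 1 \<le> V \<omega> \<and> G \<omega> = 1)"
        using le False by (intro nested_AE) auto
      then show ?thesis by (auto elim!: AE_mp)
    qed
  qed
  have "AE \<omega> in M. \<forall>d\<in>{1..dbar}. G \<omega> = 1 \<longrightarrow> v d 1 0 \<le> V \<omega> \<longrightarrow> v d 1 1 \<le> V \<omega>"
    by (rule AE_finite_allI[OF finite_atLeastAtMost]) (rule each)
  then show ?thesis
  proof (rule AE_mp, intro AE_I2 impI)
    fix \<omega> assume h: "\<forall>d\<in>{1..dbar}. G \<omega> = 1 \<longrightarrow> v d 1 0 \<le> V \<omega> \<longrightarrow> v d 1 1 \<le> V \<omega>" and g: "G \<omega> = 1"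
    show "Dp 0 \<omega> \<le> Dp 1 \<omega>" unfolding Dp_def using h g by (intro sum_mono) auto
  qed
qed

end

lemma telescope:
  fixes f :: "nat \<Rightarrow> real"
  assumes "a \<le> b" "b \<le> n"
  shows "f b - f a = (\<Sum>d\<in>{1..n}. if a < d \<and> d \<le> b then f d - f (d - 1) else 0)"
  using assms
proof (induction b)
  case 0 then show ?case by simp
next
  case (Suc b)
  show ?case
  proof (cases "a = Suc b")
    case True
    have "(\<Sum>d\<in>{1..n}. if a < d \<and> d \<le> Suc b then f d - f (d - 1) else 0) = 0"
      using True by (intro sum.neutral) auto
    then show ?thesis using True by simp
  next
    case False
    then have ab: "a \<le> b" using Suc by simp
    have "(\<Sum>d\<in>{1..n}. if a < d \<and> d \<le> Suc b then f d - f (d - 1) else 0)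
        = (\<Sum>d\<in>{1..n}. (if a < d \<and> d \<le> b then f d - f (d - 1) else 0) + (if d = Suc b then f d - f (d - 1) else 0))"
      using ab by (intro sum.cong) auto
    also have "\<dots> = (f b - f a) + (f (Suc b) - f b)"
      using Suc ab by (simp add: sum.distrib sum.delta)
    finally show ?thesis by simp
  qed
qed

lemma sel_int:
  fixes f :: "nat \<Rightarrow> 'a \<Rightarrow> real"
  assumes K: "K \<in> measurable M (count_space UNIV)" and Kle: "\<And>\<omega>. \<omega> \<in> space M \<Longrightarrow> K \<omega> \<le> n"
    and f: "\<And>k. k \<le> n \<Longrightarrow> integrable M (f k)"
  shows "integrable M (\<lambda>\<omega>. f (K \<omega>) \<omega>)"
proof -
  have h1: "integrable M (\<lambda>\<omega>. \<Sum>k\<in>{..n}. indicator {\<omega>\<in>space M. K \<omega> = k} \<omega> *\<^sub>R f k \<omega>)"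
    using K f by (intro Bochner_Integration.integrable_sum integrable_mult_indicator) auto
  have h2: "\<And>\<omega>. \<omega> \<in> space M \<Longrightarrow> (\<Sum>k\<in>{..n}. indicator {\<omega>\<in>space M. K \<omega> = k} \<omega> *\<^sub>R f k \<omega>) = f (K \<omega>) \<omega>"
    using Kle by (simp add: indicator_def sum.delta)
  have "integrable M (\<lambda>\<omega>. f (K \<omega>) \<omega>) = integrable M (\<lambda>\<omega>. \<Sum>k\<in>{..n}. indicator {\<omega>\<in>space M. K \<omega> = k} \<omega> *\<^sub>R f k \<omega>)"
    by (rule Bochner_Integration.integrable_cong) (auto simp only: h2)
  with h1 show ?thesis by simp
qed

lemma int_ind_mult:
  fixes X :: "'a \<Rightarrow> real"
  assumes "Measurable.pred M P" "integrable M X"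
  shows "integrable M (\<lambda>\<omega>. indicator (ev M P) \<omega> * X \<omega>)"
  using integrable_mult_indicator[of "ev M P" M X] assms
  by (simp add: ev_def Measurable.pred_def) 

context model begin

lemma Yo_int: "integrable M Yo"
  unfolding Yo_def by (rule sel_int[of _ _ dbar]) (auto simp: D_le Y_int)

lemma Yc_int: "integrable M Yc"
  unfolding Yc_def by (rule sel_int[of _ _ dbar]) (auto simp: Dp_le Y_int)

lemma cprob_ge_sum:
  assumes [measurable]: "Measurable.pred M B"
  shows "cprob M (\<lambda>\<omega>. d \<le> D \<omega>) B = (\<Sum>k\<in>{d..dbar}. cprob M (\<lambda>\<omega>. D \<omega> = k) B)"
proof -
  have "pr M (\<lambda>\<omega>. d \<le> D \<omega> \<and> B \<omega>) = (\<Sum>k\<in>{d..dbar}. pr M (\<lambda>\<omega>. D \<omega> = k \<and> B \<omega>))"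
    by (rule pr_sum) (auto simp: D_le)
  then show ?thesis by (simp add: cprob_def sum_divide_distrib)
qed

lemma ED_sum:
  assumes [measurable]: "Measurable.pred M B"
  shows "cexp M (\<lambda>\<omega>. real (D \<omega>)) B = (\<Sum>d\<in>{1..dbar}. cprob M (\<lambda>\<omega>. d \<le> D \<omega>) B)"
proof -
  have "(\<integral>\<omega>. indicator (ev M B) \<omega> * real (D \<omega>) \<partial>M) = (\<integral>\<omega>. (\<Sum>d\<in>{1..dbar}. indicator (ev M (\<lambda>\<omega>. d \<le> D \<omega> \<and> B \<omega>)) \<omega>) \<partial>M)"
  proof (rule Bochner_Integration.integral_cong[OF refl])
    fix \<omega> assume \<omega>: "\<omega> \<in> space M"
    have "real (D \<omega>) = (\<Sum>d\<in>{1..dbar}. if d \<le> D \<omega> then 1 else 0)"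
    proof -
      have "(\<Sum>d\<in>{1..dbar}. if d \<le> D \<omega> then 1 else 0 :: real) = sum (\<lambda>_. 1) {d\<in>{1..dbar}. d \<le> D \<omega>}"
        by (rule sum.inter_filter[symmetric]) simp
      also have "{d\<in>{1..dbar}. d \<le> D \<omega>} = {1..D \<omega>}" using D_le[of \<omega>] by auto
      finally show ?thesis by simp
    qed
    note rD = this
    have s1: "(\<Sum>d\<in>{1..dbar}. indicator (ev M (\<lambda>\<omega>. d \<le> D \<omega> \<and> B \<omega>)) \<omega>) = (\<Sum>d\<in>{1..dbar}. indicator (ev M B) \<omega> * (if d \<le> D \<omega> then 1 else 0 :: real))"
      using \<omega> by (intro sum.cong refl) (simp add: ev_def indicator_def)
    show "indicator (ev M B) \<omega> * real (D \<omega>) = (\<Sum>d\<in>{1..dbar}. indicator (ev M (\<lambda>\<omega>. d \<le> D \<omega> \<and> B \<omega>)) \<omega>)"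
      by (simp only: s1 sum_distrib_left[symmetric] rD[symmetric])
  qed
  also have "\<dots> = (\<Sum>d\<in>{1..dbar}. (\<integral>\<omega>. indicator (ev M (\<lambda>\<omega>. d \<le> D \<omega> \<and> B \<omega>)) \<omega> \<partial>M))"
    by (rule Bochner_Integration.integral_sum) (rule int_ind, simp)
  also have "\<dots> = (\<Sum>d\<in>{1..dbar}. pr M (\<lambda>\<omega>. d \<le> D \<omega> \<and> B \<omega>))"
    by (intro sum.cong refl pr_int[symmetric]) simp
  finally have "(\<integral>\<omega>. indicator (ev M B) \<omega> * real (D \<omega>) \<partial>M) = (\<Sum>d\<in>{1..dbar}. pr M (\<lambda>\<omega>. d \<le> D \<omega> \<and> B \<omega>))" .
  then show ?thesis by (simp add: cexp_def cprob_def sum_divide_distrib)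
qed

end

context model begin
definition "Ecell X g t = cexp M X (\<lambda>\<omega>. G \<omega> = g \<and> T \<omega> = t)"
definition "diffw d = cprob M (\<lambda>\<omega>. d \<le> D \<omega>) (\<lambda>\<omega>. G \<omega> = 1 \<and> T \<omega> = 1) - cprob M (\<lambda>\<omega>. d \<le> D \<omega>) (\<lambda>\<omega>. G \<omega> = 1 \<and> T \<omega> = 0)"
definition "cd d = cexp M (\<lambda>\<omega>. Y d \<omega> - Y (d - 1) \<omega>) (\<lambda>\<omega>. Dp 0 \<omega> < d \<and> d \<le> Dp 1 \<omega> \<and> G \<omega> = 1 \<and> T \<omega> = 1)"

lemma core:
  assumes a2: "AE \<omega> in M. G \<omega> = 1 \<longrightarrow> Dp 0 \<omega> \<le> Dp 1 \<omega>"
  shows "Ecell Yo 1 1 - Ecell Yc 1 1 = (\<Sum>d\<in>{1..dbar}. diffw d * cd d)"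
proof -
  let ?C = "\<lambda>\<omega>. G \<omega> = 1 \<and> T \<omega> = 1"
  let ?E = "\<lambda>d \<omega>. Dp 0 \<omega> < d \<and> d \<le> Dp 1 \<omega> \<and> G \<omega> = 1 \<and> T \<omega> = 1"
  have p11: "pr M ?C > 0" using cell_pos[of 1 1] by simp
  have Yd_int: "d \<le> dbar \<Longrightarrow> integrable M (Y d)" for d using Y_int by auto
  have "(\<integral>\<omega>. indicator (ev M ?C) \<omega> * Yo \<omega> \<partial>M) - (\<integral>\<omega>. indicator (ev M ?C) \<omega> * Yc \<omega> \<partial>M)
      = (\<integral>\<omega>. indicator (ev M ?C) \<omega> * Yo \<omega> - indicator (ev M ?C) \<omega> * Yc \<omega> \<partial>M)"
    by (intro Bochner_Integration.integral_diff[symmetric] int_ind_mult Yo_int Yc_int) auto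
  also have "\<dots> = (\<integral>\<omega>. (\<Sum>d\<in>{1..dbar}. indicator (ev M (?E d)) \<omega> * (Y d \<omega> - Y (d - 1) \<omega>)) \<partial>M)"
  proof (rule integral_cong_AE)
    show "(\<lambda>\<omega>. indicator (ev M ?C) \<omega> * Yo \<omega> - indicator (ev M ?C) \<omega> * Yc \<omega>) \<in> borel_measurable M"
      by measurable
    show "(\<lambda>\<omega>. \<Sum>d\<in>{1..dbar}. indicator (ev M (?E d)) \<omega> * (Y d \<omega> - Y (d - 1) \<omega>)) \<in> borel_measurable M"
      using Y_meas by (intro borel_measurable_sum borel_measurable_times borel_measurable_diff) auto
    show "AE \<omega> in M. indicator (ev M ?C) \<omega> * Yo \<omega> - indicator (ev M ?C) \<omega> * Yc \<omega>
        = (\<Sum>d\<in>{1..dbar}. indicator (ev M (?E d)) \<omega> * (Y d \<omega> - Y (d - 1) \<omega>))"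
    proof (rule AE_mp[OF a2], rule AE_I2, intro impI)
      fix \<omega> assume \<omega>: "\<omega> \<in> space M" and h: "G \<omega> = 1 \<longrightarrow> Dp 0 \<omega> \<le> Dp 1 \<omega>"
      show "indicator (ev M ?C) \<omega> * Yo \<omega> - indicator (ev M ?C) \<omega> * Yc \<omega>
        = (\<Sum>d\<in>{1..dbar}. indicator (ev M (?E d)) \<omega> * (Y d \<omega> - Y (d - 1) \<omega>))"
      proof (cases "?C \<omega>")
        case True
        then have le: "Dp 0 \<omega> \<le> Dp 1 \<omega>" using h by simp
        have "Yo \<omega> - Yc \<omega> = Y (Dp 1 \<omega>) \<omega> - Y (Dp 0 \<omega>) \<omega>" using True by (simp add: Yo_def Yc_def D_def)
        also have "\<dots> = (\<Sum>d\<in>{1..dbar}. if Dp 0 \<omega> < d \<and> d \<le> Dp 1 \<omega> then Y d \<omega> - Y (d - 1) \<omega> else 0)"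
          using telescope[OF le Dp_le, of "\<lambda>d. Y d \<omega>"] by simp
        finally have e1: "Yo \<omega> - Yc \<omega> = (\<Sum>d\<in>{1..dbar}. if Dp 0 \<omega> < d \<and> d \<le> Dp 1 \<omega> then Y d \<omega> - Y (d - 1) \<omega> else 0)" .
        have e2: "(\<Sum>d\<in>{1..dbar}. indicator (ev M (?E d)) \<omega> * (Y d \<omega> - Y (d - 1) \<omega>))
            = (\<Sum>d\<in>{1..dbar}. if Dp 0 \<omega> < d \<and> d \<le> Dp 1 \<omega> then Y d \<omega> - Y (d - 1) \<omega> else 0)"
          using True \<omega> by (intro sum.cong refl) (simp add: ev_def indicator_def)
        have e3: "indicator (ev M ?C) \<omega> * Yo \<omega> - indicator (ev M ?C) \<omega> * Yc \<omega> = Yo \<omega> - Yc \<omega>"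
          using True \<omega> by (simp add: ev_def indicator_def)
        show ?thesis unfolding e3 e2 e1 ..
      next
        case False
        have z1: "indicator (ev M (?E d)) \<omega> = (0::real)" for d using False by (auto simp: ev_def indicator_def)
        have z2: "indicator (ev M ?C) \<omega> = (0::real)" using False by (auto simp: ev_def indicator_def)
        show ?thesis by (simp only: z1 z2) simp
      qed
    qed
  qed
  also have "\<dots> = (\<Sum>d\<in>{1..dbar}. (\<integral>\<omega>. indicator (ev M (?E d)) \<omega> * (Y d \<omega> - Y (d - 1) \<omega>) \<partial>M))"
    using Yd_int by (intro Bochner_Integration.integral_sum int_ind_mult Bochner_Integration.integrable_diff) auto
  also have "\<dots> = (\<Sum>d\<in>{1..dbar}. cd d * pr M (?E d))"
    unfolding cd_def by (intro sum.cong refl int_cexp) auto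
  finally have eq1: "(\<integral>\<omega>. indicator (ev M ?C) \<omega> * Yo \<omega> \<partial>M) - (\<integral>\<omega>. indicator (ev M ?C) \<omega> * Yc \<omega> \<partial>M)
     = (\<Sum>d\<in>{1..dbar}. cd d * pr M (?E d))" .
  have prE: "pr M (?E d) / pr M ?C = diffw d" for d
  proof -
    have "pr M (\<lambda>\<omega>. d \<le> Dp 1 \<omega> \<and> G \<omega> = 1 \<and> T \<omega> = 1) = pr M (\<lambda>\<omega>. ?E d \<omega> \<or> (d \<le> Dp 0 \<omega> \<and> G \<omega> = 1 \<and> T \<omega> = 1))"
    proof (rule pr_AE)
      show "AE \<omega> in M. (d \<le> Dp 1 \<omega> \<and> G \<omega> = 1 \<and> T \<omega> = 1) = (?E d \<omega> \<or> (d \<le> Dp 0 \<omega> \<and> G \<omega> = 1 \<and> T \<omega> = 1))"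
        using a2 by eventually_elim auto
    qed measurable
    also have "\<dots> = pr M (?E d) + pr M (\<lambda>\<omega>. d \<le> Dp 0 \<omega> \<and> G \<omega> = 1 \<and> T \<omega> = 1)"
      by (intro pr_add) auto
    finally have e: "pr M (?E d) = pr M (\<lambda>\<omega>. d \<le> Dp 1 \<omega> \<and> G \<omega> = 1 \<and> T \<omega> = 1) - pr M (\<lambda>\<omega>. d \<le> Dp 0 \<omega> \<and> G \<omega> = 1 \<and> T \<omega> = 1)"
      by simp
    have c1: "cprob M (\<lambda>\<omega>. d \<le> D \<omega>) ?C = pr M (\<lambda>\<omega>. d \<le> Dp 1 \<omega> \<and> G \<omega> = 1 \<and> T \<omega> = 1) / pr M ?C"
      unfolding cprob_def by (intro arg_cong2[where f="(/)"] pr_cong refl) (auto simp: D_def)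
    have c0: "cprob M (\<lambda>\<omega>. d \<le> D \<omega>) (\<lambda>\<omega>. G \<omega> = 1 \<and> T \<omega> = 0) = pr M (\<lambda>\<omega>. d \<le> Dp 0 \<omega> \<and> G \<omega> = 1 \<and> T \<omega> = 0) / pr M (\<lambda>\<omega>. G \<omega> = 1 \<and> T \<omega> = 0)"
      unfolding cprob_def by (intro arg_cong2[where f="(/)"] pr_cong refl) (auto simp: D_def)
    have "pr M (\<lambda>\<omega>. d \<le> Dp 0 \<omega> \<and> G \<omega> = 1 \<and> T \<omega> = 1) / pr M ?C
        = pr M (\<lambda>\<omega>. d \<le> Dp 0 \<omega> \<and> G \<omega> = 1 \<and> T \<omega> = 0) / pr M (\<lambda>\<omega>. G \<omega> = 1 \<and> T \<omega> = 0)"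
      using V_prop2[of 1 1 0 "\<lambda>n. d \<le> n" 0] by simp
    then show ?thesis unfolding diffw_def c1 c0 e by (simp add: diff_divide_distrib)
  qed
  have "Ecell Yo 1 1 - Ecell Yc 1 1 = ((\<integral>\<omega>. indicator (ev M ?C) \<omega> * Yo \<omega> \<partial>M) - (\<integral>\<omega>. indicator (ev M ?C) \<omega> * Yc \<omega> \<partial>M)) / pr M ?C"
    by (simp add: Ecell_def cexp_def diff_divide_distrib)
  also have "\<dots> = (\<Sum>d\<in>{1..dbar}. cd d * (pr M (?E d) / pr M ?C))"
    unfolding eq1 by (simp add: sum_divide_distrib)
  also have "\<dots> = (\<Sum>d\<in>{1..dbar}. diffw d * cd d)" by (intro sum.cong refl) (metis prE mult.commute)
  finally show ?thesis .
qed

end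

context prob_space begin

lemma cexp_cong_AE:
  assumes [measurable]: "Measurable.pred M B" "Measurable.pred M B'" "X \<in> borel_measurable M" "X' \<in> borel_measurable M"
    and e1: "AE \<omega> in M. B \<omega> = B' \<omega>" and e2: "AE \<omega> in M. B \<omega> \<longrightarrow> X \<omega> = X' \<omega>"
  shows "cexp M X B = cexp M X' B'"
proof -
  have "(\<integral>\<omega>. indicator (ev M B) \<omega> * X \<omega> \<partial>M) = (\<integral>\<omega>. indicator (ev M B') \<omega> * X' \<omega> \<partial>M)"
  proof (rule integral_cong_AE)
    show "AE \<omega> in M. indicator (ev M B) \<omega> * X \<omega> = indicator (ev M B') \<omega> * X' \<omega>"
      using e1 e2 by eventually_elim (auto simp: ev_def indicator_def)
  qed measurable
  moreover have "pr M B = pr M B'" by (rule pr_AE) (use e1 in auto)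
  ultimately show ?thesis by (simp add: cexp_def)
qed

lemma cexp_add:
  assumes [measurable]: "Measurable.pred M B" and i: "integrable M X" "integrable M X'"
  shows "cexp M (\<lambda>\<omega>. X \<omega> + X' \<omega>) B = cexp M X B + cexp M X' B"
proof -
  have "(\<integral>\<omega>. indicator (ev M B) \<omega> * (X \<omega> + X' \<omega>) \<partial>M) = (\<integral>\<omega>. indicator (ev M B) \<omega> * X \<omega> + indicator (ev M B) \<omega> * X' \<omega> \<partial>M)"
    by (simp add: distrib_left)
  also have "\<dots> = (\<integral>\<omega>. indicator (ev M B) \<omega> * X \<omega> \<partial>M) + (\<integral>\<omega>. indicator (ev M B) \<omega> * X' \<omega> \<partial>M)"
    by (intro Bochner_Integration.integral_add int_ind_mult i) auto
  finally show ?thesis by (simp add: cexp_def add_divide_distrib)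
qed

end

context model begin

lemma decomp:
  assumes Z: "\<And>d. d \<le> dbar \<Longrightarrow> integrable M (Z d)" and g: "g \<le> 1" and t: "t \<le> 1"
  shows "Ecell (\<lambda>\<omega>. Z (Dp 0 \<omega>) \<omega>) g t = (\<Sum>d\<in>{..dbar}. cexp M (Z d) (\<lambda>\<omega>. G \<omega> = g \<and> T \<omega> = t \<and> Dp 0 \<omega> = d)
       * (pr M (\<lambda>\<omega>. G \<omega> = g \<and> T \<omega> = t \<and> Dp 0 \<omega> = d) / pr M (\<lambda>\<omega>. G \<omega> = g \<and> T \<omega> = t)))"
proof -
  let ?B = "\<lambda>\<omega>. G \<omega> = g \<and> T \<omega> = t"
  let ?Bd = "\<lambda>d \<omega>. G \<omega> = g \<and> T \<omega> = t \<and> Dp 0 \<omega> = d"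
  have "(\<integral>\<omega>. indicator (ev M ?B) \<omega> * Z (Dp 0 \<omega>) \<omega> \<partial>M) = (\<integral>\<omega>. (\<Sum>d\<in>{..dbar}. indicator (ev M (?Bd d)) \<omega> * Z d \<omega>) \<partial>M)"
  proof (rule Bochner_Integration.integral_cong[OF refl])
    fix \<omega> assume \<omega>: "\<omega> \<in> space M"
    have "(\<Sum>d\<in>{..dbar}. indicator (ev M (?Bd d)) \<omega> * Z d \<omega>) = (\<Sum>d\<in>{..dbar}. if d = Dp 0 \<omega> then indicator (ev M ?B) \<omega> * Z d \<omega> else 0)"
      using \<omega> by (intro sum.cong refl) (auto simp: ev_def indicator_def)
    also have "\<dots> = indicator (ev M ?B) \<omega> * Z (Dp 0 \<omega>) \<omega>"
      using Dp_le[of 0 \<omega>] by (simp add: sum.delta)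
    finally show "indicator (ev M ?B) \<omega> * Z (Dp 0 \<omega>) \<omega> = (\<Sum>d\<in>{..dbar}. indicator (ev M (?Bd d)) \<omega> * Z d \<omega>)" by simp
  qed
  also have "\<dots> = (\<Sum>d\<in>{..dbar}. (\<integral>\<omega>. indicator (ev M (?Bd d)) \<omega> * Z d \<omega> \<partial>M))"
    by (rule Bochner_Integration.integral_sum) (rule int_ind_mult, simp, rule Z, simp)
  also have "\<dots> = (\<Sum>d\<in>{..dbar}. cexp M (Z d) (?Bd d) * pr M (?Bd d))"
    by (intro sum.cong refl int_cexp) simp
  finally show ?thesis unfolding Ecell_def cexp_def[of M _ ?B] by (simp add: sum_divide_distrib)
qed

lemma prop_Dp0:
  assumes "g \<le> 1"
  shows "pr M (\<lambda>\<omega>. G \<omega> = g \<and> T \<omega> = 1 \<and> Dp 0 \<omega> = d) / pr M (\<lambda>\<omega>. G \<omega> = g \<and> T \<omega> = 1)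
       = pr M (\<lambda>\<omega>. G \<omega> = g \<and> T \<omega> = 0 \<and> Dp 0 \<omega> = d) / pr M (\<lambda>\<omega>. G \<omega> = g \<and> T \<omega> = 0)"
proof -
  have "pr M (\<lambda>\<omega>. G \<omega> = g \<and> T \<omega> = t \<and> Dp 0 \<omega> = d) = pr M (\<lambda>\<omega>. Dp 0 \<omega> = d \<and> G \<omega> = g \<and> T \<omega> = t)" for t
    by (intro pr_cong) auto
  then show ?thesis using V_prop2[of g 1 0 "\<lambda>n. n = d" 0] assms by simp
qed

lemma Yo_Yc_G0:
  assumes a1: "AE \<omega> in M. G \<omega> = 0 \<longrightarrow> Dp 1 \<omega> = Dp 0 \<omega>" and t: "t \<le> 1"
  shows "Ecell Yo 0 t = Ecell Yc 0 t"
  unfolding Ecell_def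
proof (rule cexp_cong_AE)
  show "AE \<omega> in M. G \<omega> = 0 \<and> T \<omega> = t \<longrightarrow> Yo \<omega> = Yc \<omega>"
  proof -
    have tt: "t = 0 \<or> t = 1" using t by auto
    show ?thesis using a1 by eventually_elim (use tt in \<open>auto simp: Yo_def Yc_def D_def\<close>)
  qed
qed auto

lemma Yo_Yc_T0: "Ecell Yo g 0 = Ecell Yc g 0"
  unfolding Ecell_def by (rule cexp_cong_AE) (auto simp: Yo_def Yc_def D_def)

end

context prob_space begin
lemma cexp_const: assumes "Measurable.pred M B" shows "cexp M (\<lambda>_. c) B * (pr M B / x) = c * (pr M B / x)"
proof (cases "pr M B = 0")
  case False
  have "(\<integral>\<omega>. indicator (ev M B) \<omega> * c \<partial>M) = (\<integral>\<omega>. indicator (ev M B) \<omega> \<partial>M) * c"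
    by (rule integral_mult_left_zero)
  also have "\<dots> = pr M B * c" using assms by (simp add: pr_int)
  finally show ?thesis using False by (simp add: cexp_def)
qed simp
end

context model begin

lemma Yc_split: "Ecell Yc g t = Ecell (Y 0) g t + Ecell (\<lambda>\<omega>. Y (Dp 0 \<omega>) \<omega> - Y 0 \<omega>) g t"
proof -
  have i0: "integrable M (Y 0)" using Y_int by auto
  have iZ: "integrable M (\<lambda>\<omega>. Y (Dp 0 \<omega>) \<omega> - Y 0 \<omega>)"
    using sel_int[of "Dp 0" M dbar "\<lambda>d \<omega>. Y d \<omega> - Y 0 \<omega>"] Y_int by (auto simp: Dp_le)
  have "Ecell Yc g t = Ecell (\<lambda>\<omega>. Y 0 \<omega> + (Y (Dp 0 \<omega>) \<omega> - Y 0 \<omega>)) g t"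
    unfolding Yc_def by simp
  also have "\<dots> = Ecell (Y 0) g t + Ecell (\<lambda>\<omega>. Y (Dp 0 \<omega>) \<omega> - Y 0 \<omega>) g t"
    unfolding Ecell_def by (rule cexp_add[OF _ i0 iZ]) simp
  finally show ?thesis .
qed

lemma part1:
  assumes a1: "AE \<omega> in M. G \<omega> = 0 \<longrightarrow> Dp 1 \<omega> = Dp 0 \<omega>"
    and a2: "AE \<omega> in M. G \<omega> = 1 \<longrightarrow> Dp 0 \<omega> \<le> Dp 1 \<omega>"
    and A3: "Ecell (Y 0) 1 1 - Ecell (Y 0) 1 0 = Ecell (Y 0) 0 1 - Ecell (Y 0) 0 0"
    and A4: "\<forall>d\<le>dbar. \<forall>g\<le>1.
            cexp M (\<lambda>\<omega>. Y d \<omega> - Y 0 \<omega>) (\<lambda>\<omega>. G \<omega> = g \<and> T \<omega> = 1 \<and> Dp 0 \<omega> = d)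
          = cexp M (\<lambda>\<omega>. Y d \<omega> - Y 0 \<omega>) (\<lambda>\<omega>. G \<omega> = g \<and> T \<omega> = 0 \<and> Dp 0 \<omega> = d)"
  shows "Ecell Yo 1 1 - Ecell Yo 1 0 - (Ecell Yo 0 1 - Ecell Yo 0 0) = (\<Sum>d\<in>{1..dbar}. diffw d * cd d)"
proof -
  have dg: "Ecell Yc g 1 - Ecell Yc g 0 = Ecell (Y 0) g 1 - Ecell (Y 0) g 0" if g: "g \<le> 1" for g
  proof -
    have iZ: "d \<le> dbar \<Longrightarrow> integrable M (\<lambda>\<omega>. Y d \<omega> - Y 0 \<omega>)" for d using Y_int by auto
    have e: "Ecell (\<lambda>\<omega>. Y (Dp 0 \<omega>) \<omega> - Y 0 \<omega>) g t = (\<Sum>d\<in>{..dbar}. cexp M (\<lambda>\<omega>. Y d \<omega> - Y 0 \<omega>) (\<lambda>\<omega>. G \<omega> = g \<and> T \<omega> = t \<and> Dp 0 \<omega> = d)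
       * (pr M (\<lambda>\<omega>. G \<omega> = g \<and> T \<omega> = t \<and> Dp 0 \<omega> = d) / pr M (\<lambda>\<omega>. G \<omega> = g \<and> T \<omega> = t)))" if "t \<le> 1" for t
      using decomp[OF iZ g that] by simp
    have "Ecell (\<lambda>\<omega>. Y (Dp 0 \<omega>) \<omega> - Y 0 \<omega>) g 1 = Ecell (\<lambda>\<omega>. Y (Dp 0 \<omega>) \<omega> - Y 0 \<omega>) g 0"
      unfolding e[of 1, OF order_refl] e[of 0, OF le0]
    proof (intro sum.cong refl)
      fix d assume "d \<in> {..dbar}"
      then show "cexp M (\<lambda>\<omega>. Y d \<omega> - Y 0 \<omega>) (\<lambda>\<omega>. G \<omega> = g \<and> T \<omega> = 1 \<and> Dp 0 \<omega> = d)
       * (pr M (\<lambda>\<omega>. G \<omega> = g \<and> T \<omega> = 1 \<and> Dp 0 \<omega> = d) / pr M (\<lambda>\<omega>. G \<omega> = g \<and> T \<omega> = 1))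
       = cexp M (\<lambda>\<omega>. Y d \<omega> - Y 0 \<omega>) (\<lambda>\<omega>. G \<omega> = g \<and> T \<omega> = 0 \<and> Dp 0 \<omega> = d)
       * (pr M (\<lambda>\<omega>. G \<omega> = g \<and> T \<omega> = 0 \<and> Dp 0 \<omega> = d) / pr M (\<lambda>\<omega>. G \<omega> = g \<and> T \<omega> = 0))"
        using A4 g prop_Dp0[OF g, of d] by simp
    qed
    then show ?thesis using Yc_split[of g 1] Yc_split[of g 0] by simp
  qed
  have "Ecell Yo 1 1 - Ecell Yo 1 0 - (Ecell Yo 0 1 - Ecell Yo 0 0)
      = (Ecell Yo 1 1 - Ecell Yc 1 1) + (Ecell Yc 1 1 - Ecell Yc 1 0) - (Ecell Yc 0 1 - Ecell Yc 0 0)"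
    using Yo_Yc_T0[of 1] Yo_Yc_G0[OF a1, of 1] Yo_Yc_G0[OF a1, of 0] by simp
  also have "\<dots> = Ecell Yo 1 1 - Ecell Yc 1 1" using dg[of 0] dg[of 1] A3 by simp
  also have "\<dots> = (\<Sum>d\<in>{1..dbar}. diffw d * cd d)" by (rule core[OF a2])
  finally show ?thesis .
qed

lemma part2:
  assumes a1: "AE \<omega> in M. G \<omega> = 0 \<longrightarrow> Dp 1 \<omega> = Dp 0 \<omega>"
    and A3': "\<forall>d\<le>dbar.
            cexp M (Y d) (\<lambda>\<omega>. G \<omega> = 1 \<and> T \<omega> = 1 \<and> Dp 0 \<omega> = d)
            - cexp M (Y d) (\<lambda>\<omega>. G \<omega> = 1 \<and> T \<omega> = 0 \<and> Dp 0 \<omega> = d)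
          = cexp M (Y d) (\<lambda>\<omega>. G \<omega> = 0 \<and> T \<omega> = 1 \<and> Dp 0 \<omega> = d)
            - cexp M (Y d) (\<lambda>\<omega>. G \<omega> = 0 \<and> T \<omega> = 0 \<and> Dp 0 \<omega> = d)"
    and \<delta>_def: "\<delta> = (\<lambda>d. cexp M Yo (\<lambda>\<omega>. D \<omega> = d \<and> G \<omega> = 0 \<and> T \<omega> = 1)
                 - cexp M Yo (\<lambda>\<omega>. D \<omega> = d \<and> G \<omega> = 0 \<and> T \<omega> = 0))"
  shows "cexp M (\<lambda>\<omega>. Yo \<omega> + \<delta> (D \<omega>)) (\<lambda>\<omega>. G \<omega> = 1 \<and> T \<omega> = 0) = Ecell Yc 1 1"
proof -
  let ?P = "\<lambda>g t d. pr M (\<lambda>\<omega>. G \<omega> = g \<and> T \<omega> = t \<and> Dp 0 \<omega> = d) / pr M (\<lambda>\<omega>. G \<omega> = g \<and> T \<omega> = t)"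
  have \<delta>: "\<delta> d = cexp M (Y d) (\<lambda>\<omega>. G \<omega> = 0 \<and> T \<omega> = 1 \<and> Dp 0 \<omega> = d) - cexp M (Y d) (\<lambda>\<omega>. G \<omega> = 0 \<and> T \<omega> = 0 \<and> Dp 0 \<omega> = d)"
    if d: "d \<le> dbar" for d
  proof -
    have m: "Y d \<in> borel_measurable M" using Y_meas d by simp
    have "cexp M Yo (\<lambda>\<omega>. D \<omega> = d \<and> G \<omega> = 0 \<and> T \<omega> = t) = cexp M (Y d) (\<lambda>\<omega>. G \<omega> = 0 \<and> T \<omega> = t \<and> Dp 0 \<omega> = d)"
      if t: "t = 0 \<or> t = 1" for t
    proof (rule cexp_cong_AE)
      show "AE \<omega> in M. (D \<omega> = d \<and> G \<omega> = 0 \<and> T \<omega> = t) = (G \<omega> = 0 \<and> T \<omega> = t \<and> Dp 0 \<omega> = d)"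
        using a1 by eventually_elim (use t in \<open>auto simp: D_def\<close>)
      show "AE \<omega> in M. D \<omega> = d \<and> G \<omega> = 0 \<and> T \<omega> = t \<longrightarrow> Yo \<omega> = Y d \<omega>"
        by (auto simp: Yo_def)
    qed (auto simp: m)
    then show ?thesis unfolding \<delta>_def by simp
  qed
  have i\<delta>: "integrable M (\<lambda>\<omega>. \<delta> (D \<omega>))"
    by (rule sel_int[of _ _ dbar, where f="\<lambda>k _. \<delta> k"]) (auto simp: D_le)
  have "cexp M (\<lambda>\<omega>. Yo \<omega> + \<delta> (D \<omega>)) (\<lambda>\<omega>. G \<omega> = 1 \<and> T \<omega> = 0)
      = Ecell Yo 1 0 + cexp M (\<lambda>\<omega>. \<delta> (D \<omega>)) (\<lambda>\<omega>. G \<omega> = 1 \<and> T \<omega> = 0)"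
    unfolding Ecell_def by (rule cexp_add[OF _ Yo_int i\<delta>]) simp
  also have "cexp M (\<lambda>\<omega>. \<delta> (D \<omega>)) (\<lambda>\<omega>. G \<omega> = 1 \<and> T \<omega> = 0) = Ecell (\<lambda>\<omega>. (\<lambda>d _. \<delta> d) (Dp 0 \<omega>) \<omega>) 1 0"
    unfolding Ecell_def
  proof (rule cexp_cong_AE)
    show "(\<lambda>\<omega>. \<delta> (D \<omega>)) \<in> borel_measurable M" using i\<delta> by auto
    show "(\<lambda>\<omega>. (\<lambda>d _. \<delta> d) (Dp 0 \<omega>) \<omega>) \<in> borel_measurable M" by measurable
  qed (auto simp: D_def)
  also have "\<dots> = (\<Sum>d\<in>{..dbar}. \<delta> d * ?P 1 0 d)"
  proof -
    have "Ecell (\<lambda>\<omega>. (\<lambda>d _. \<delta> d) (Dp 0 \<omega>) \<omega>) 1 0 = (\<Sum>d\<in>{..dbar}. cexp M (\<lambda>_. \<delta> d) (\<lambda>\<omega>. G \<omega> = 1 \<and> T \<omega> = 0 \<and> Dp 0 \<omega> = d) * ?P 1 0 d)"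
      by (rule decomp) auto
    also have "\<dots> = (\<Sum>d\<in>{..dbar}. \<delta> d * ?P 1 0 d)"
      by (intro sum.cong refl cexp_const) simp
    finally show ?thesis .
  qed
  also have "\<dots> = Ecell Yc 1 1 - Ecell Yc 1 0"
  proof -
    have Yi: "d \<le> dbar \<Longrightarrow> integrable M (Y d)" for d using Y_int by auto
    have "Ecell Yc 1 t = (\<Sum>d\<in>{..dbar}. cexp M (Y d) (\<lambda>\<omega>. G \<omega> = 1 \<and> T \<omega> = t \<and> Dp 0 \<omega> = d) * ?P 1 t d)" if "t \<le> 1" for t
      unfolding Yc_def by (rule decomp[OF Yi _ that]) auto
    then have "Ecell Yc 1 1 - Ecell Yc 1 0 = (\<Sum>d\<in>{..dbar}. cexp M (Y d) (\<lambda>\<omega>. G \<omega> = 1 \<and> T \<omega> = 1 \<and> Dp 0 \<omega> = d) * ?P 1 1 d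
         - cexp M (Y d) (\<lambda>\<omega>. G \<omega> = 1 \<and> T \<omega> = 0 \<and> Dp 0 \<omega> = d) * ?P 1 0 d)"
      by (simp add: sum_subtractf)
    also have "\<dots> = (\<Sum>d\<in>{..dbar}. \<delta> d * ?P 1 0 d)"
    proof (intro sum.cong refl)
      fix d assume "d \<in> {..dbar}"
      then have d: "d \<le> dbar" by simp
      show "cexp M (Y d) (\<lambda>\<omega>. G \<omega> = 1 \<and> T \<omega> = 1 \<and> Dp 0 \<omega> = d) * ?P 1 1 d
         - cexp M (Y d) (\<lambda>\<omega>. G \<omega> = 1 \<and> T \<omega> = 0 \<and> Dp 0 \<omega> = d) * ?P 1 0 d = \<delta> d * ?P 1 0 d"
      proof -
        have p: "?P 1 1 d = ?P 1 0 d" using prop_Dp0[of 1 d] by simp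
        have a: "cexp M (Y d) (\<lambda>\<omega>. G \<omega> = 1 \<and> T \<omega> = 1 \<and> Dp 0 \<omega> = d) - cexp M (Y d) (\<lambda>\<omega>. G \<omega> = 1 \<and> T \<omega> = 0 \<and> Dp 0 \<omega> = d) = \<delta> d"
          using \<delta>[OF d] A3'[rule_format, OF d] by simp
        show ?thesis unfolding p left_diff_distrib[symmetric] a ..
      qed
    qed
    finally show ?thesis by simp
  qed
  finally show ?thesis using Yo_Yc_T0[of 1] by simp
qed

end

context model begin

lemma cic_ae:
  fixes h :: "nat \<Rightarrow> real \<Rightarrow> nat \<Rightarrow> real" and U :: "nat \<Rightarrow> 'a \<Rightarrow> real" and d :: nat
  defines "F00 \<equiv> ccdf M Yo (\<lambda>\<omega>. D \<omega> = d \<and> G \<omega> = 0 \<and> T \<omega> = 0)"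
    and "F01 \<equiv> ccdf M Yo (\<lambda>\<omega>. D \<omega> = d \<and> G \<omega> = 0 \<and> T \<omega> = 1)"
    and "F10 \<equiv> ccdf M Yo (\<lambda>\<omega>. D \<omega> = d \<and> G \<omega> = 1 \<and> T \<omega> = 0)"
  assumes a1: "AE \<omega> in M. G \<omega> = 0 \<longrightarrow> Dp 1 \<omega> = Dp 0 \<omega>"
    and p00: "pr M (\<lambda>\<omega>. D \<omega> = d \<and> G \<omega> = 0 \<and> T \<omega> = 0) > 0"
    and p01: "pr M (\<lambda>\<omega>. D \<omega> = d \<and> G \<omega> = 0 \<and> T \<omega> = 1) > 0"
    and p10: "pr M (\<lambda>\<omega>. D \<omega> = d \<and> G \<omega> = 1 \<and> T \<omega> = 0) > 0"
    and Um[measurable]: "U d \<in> borel_measurable M"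
    and Yh: "\<forall>\<omega>\<in>space M. Y d \<omega> = h d (U d \<omega>) (T \<omega>)"
    and hm: "\<forall>t\<le>1. strict_mono (\<lambda>u. h d u t)"
    and ci: "cindep M (U d) T (\<lambda>\<omega>. G \<omega> = 0 \<and> Dp 0 \<omega> = d)"
    and Sint: "is_interval S"
    and s01: "csupp M Yo (\<lambda>\<omega>. D \<omega> = d \<and> G \<omega> = 0 \<and> T \<omega> = 1) = S"
    and s10: "csupp M Yo (\<lambda>\<omega>. D \<omega> = d \<and> G \<omega> = 1 \<and> T \<omega> = 0) = S"
    and m00: "strict_mono_on S F00" and m01: "strict_mono_on S F01"
    and cont10: "continuous_on UNIV F10"
  shows "AE \<omega> in M. (G \<omega> = 1 \<and> T \<omega> = 0 \<and> Dp 0 \<omega> = d) \<longrightarrow> quantile F01 (F00 (Y d \<omega>)) = h d (U d \<omega>) 1"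
proof -
  let ?C = "\<lambda>\<omega>. G \<omega> = 0 \<and> Dp 0 \<omega> = d"
  let ?c00 = "\<lambda>\<omega>. D \<omega> = d \<and> G \<omega> = 0 \<and> T \<omega> = 0"
  let ?c01 = "\<lambda>\<omega>. D \<omega> = d \<and> G \<omega> = 0 \<and> T \<omega> = 1"
  let ?c10 = "\<lambda>\<omega>. D \<omega> = d \<and> G \<omega> = 1 \<and> T \<omega> = 0"
  have h0: "strict_mono (\<lambda>u. h d u 0)" and h1: "strict_mono (\<lambda>u. h d u 1)" using hm by auto
  have step1: "F01 (h d u 1) = F00 (h d u 0)" for u
  proof -
    have e1: "pr M (\<lambda>\<omega>. Yo \<omega> \<le> h d u 1 \<and> ?c01 \<omega>) = pr M (\<lambda>\<omega>. U d \<omega> \<le> u \<and> T \<omega> = 1 \<and> ?C \<omega>)"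
    proof (rule pr_AE)
      show "AE \<omega> in M. (Yo \<omega> \<le> h d u 1 \<and> ?c01 \<omega>) = (U d \<omega> \<le> u \<and> T \<omega> = 1 \<and> ?C \<omega>)"
      proof (rule AE_mp[OF a1], rule AE_I2, intro impI)
        fix \<omega> assume \<omega>: "\<omega> \<in> space M" and elim: "G \<omega> = 0 \<longrightarrow> Dp 1 \<omega> = Dp 0 \<omega>"
        show "(Yo \<omega> \<le> h d u 1 \<and> ?c01 \<omega>) = (U d \<omega> \<le> u \<and> T \<omega> = 1 \<and> ?C \<omega>)"
        proof (cases "G \<omega> = 0 \<and> T \<omega> = 1")
          case True
          then have "D \<omega> = Dp 0 \<omega>" using elim by (simp add: D_def)
          moreover have "D \<omega> = d \<Longrightarrow> Yo \<omega> = h d (U d \<omega>) 1" using Yh \<omega> True by (simp add: Yo_def)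
          ultimately show ?thesis using True strict_mono_less_eq[OF h1] by auto
        qed auto
      qed
    qed measurable
    have e2: "pr M ?c01 = pr M (\<lambda>\<omega>. T \<omega> = 1 \<and> ?C \<omega>)"
    proof (rule pr_AE)
      show "AE \<omega> in M. ?c01 \<omega> = (T \<omega> = 1 \<and> ?C \<omega>)"
        using a1 by eventually_elim (auto simp: D_def)
    qed measurable
    have e3: "pr M (\<lambda>\<omega>. Yo \<omega> \<le> h d u 0 \<and> ?c00 \<omega>) = pr M (\<lambda>\<omega>. U d \<omega> \<le> u \<and> T \<omega> = 0 \<and> ?C \<omega>)"
    proof (rule pr_cong)
      fix \<omega> assume \<omega>: "\<omega> \<in> space M"
      show "(Yo \<omega> \<le> h d u 0 \<and> ?c00 \<omega>) = (U d \<omega> \<le> u \<and> T \<omega> = 0 \<and> ?C \<omega>)"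
      proof (cases "G \<omega> = 0 \<and> T \<omega> = 0")
        case True
        then have "D \<omega> = Dp 0 \<omega>" by (simp add: D_def)
        moreover have "D \<omega> = d \<Longrightarrow> Yo \<omega> = h d (U d \<omega>) 0" using Yh \<omega> True by (simp add: Yo_def)
        ultimately show ?thesis using True strict_mono_less_eq[OF h0] by auto
      qed auto
    qed
    have e4: "pr M ?c00 = pr M (\<lambda>\<omega>. T \<omega> = 0 \<and> ?C \<omega>)"
      by (rule pr_cong) (auto simp: D_def)
    have bs: "{x. x \<le> u} \<in> sets borel" by measurable
    have ct: "pr M (\<lambda>\<omega>. U d \<omega> \<le> u \<and> T \<omega> = t \<and> ?C \<omega>) * pr M ?C = pr M (\<lambda>\<omega>. U d \<omega> \<le> u \<and> ?C \<omega>) * pr M (\<lambda>\<omega>. T \<omega> = t \<and> ?C \<omega>)" for t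
      using cindep_pr[OF ci, of "\<lambda>x. x \<le> u" t] bs by simp
    have pC: "pr M ?C > 0"
    proof -
      have "pr M (\<lambda>\<omega>. T \<omega> = 0 \<and> ?C \<omega>) \<le> pr M ?C" by (rule pr_mono) auto
      then show ?thesis using p00 e4 by simp
    qed
    have q1: "pr M (\<lambda>\<omega>. T \<omega> = 1 \<and> ?C \<omega>) > 0" using p01 e2 by simp
    have q0: "pr M (\<lambda>\<omega>. T \<omega> = 0 \<and> ?C \<omega>) > 0" using p00 e4 by simp
    have "F01 (h d u 1) = pr M (\<lambda>\<omega>. U d \<omega> \<le> u \<and> T \<omega> = 1 \<and> ?C \<omega>) / pr M (\<lambda>\<omega>. T \<omega> = 1 \<and> ?C \<omega>)"
      unfolding F01_def ccdf_def cprob_def e1 e2 ..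
    also have "\<dots> = pr M (\<lambda>\<omega>. U d \<omega> \<le> u \<and> ?C \<omega>) / pr M ?C"
      using ct[of 1] pC q1 by (simp add: field_simps)
    also have "\<dots> = pr M (\<lambda>\<omega>. U d \<omega> \<le> u \<and> T \<omega> = 0 \<and> ?C \<omega>) / pr M (\<lambda>\<omega>. T \<omega> = 0 \<and> ?C \<omega>)"
      using ct[of 0] pC q0 by (simp add: field_simps)
    also have "\<dots> = F00 (h d u 0)"
      unfolding F00_def ccdf_def cprob_def e3 e4 ..
    finally show ?thesis .
  qed
  have supp: "AE \<omega> in M. ?c10 \<omega> \<longrightarrow> Yo \<omega> \<in> S"
    using supp_AE[of Yo ?c10] s10 by simp
  have nc: "AE \<omega> in M. ?c10 \<omega> \<longrightarrow> Yo \<omega> \<in> S \<longrightarrow> F00 (Yo \<omega>) \<noteq> c" for c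
  proof (cases "\<exists>s\<in>S. F00 s = c")
    case True
    then obtain s where s: "s \<in> S" "F00 s = c" by auto
    have "isCont F10 s" using cont10 continuous_on_eq_continuous_at[of UNIV F10] by simp
    then have "pr M (\<lambda>\<omega>. ?c10 \<omega> \<and> Yo \<omega> = s) = 0"
      unfolding F10_def by (intro noatom p10) auto
    then have "AE \<omega> in M. \<not> (?c10 \<omega> \<and> Yo \<omega> = s)" by (intro pr_zero_AE) auto
    then show ?thesis
    proof eventually_elim
      case (elim \<omega>)
      show ?case
      proof (intro impI notI)
        assume "?c10 \<omega>" "Yo \<omega> \<in> S" "F00 (Yo \<omega>) = c"
        then have "Yo \<omega> = s" using strict_mono_on_eqD[OF m00, of s "Yo \<omega>"] s by simp
        then show False using elim \<open>?c10 \<omega>\<close> by simp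
      qed
    qed
  next
    case False then show ?thesis by (intro AE_I2) auto
  qed
  have all: "AE \<omega> in M. ?c10 \<omega> \<longrightarrow> Yo \<omega> \<in> S \<and> F00 (Yo \<omega>) \<noteq> 0 \<and> F00 (Yo \<omega>) \<noteq> 1"
    using supp nc[of 0] nc[of 1] by eventually_elim auto
  show ?thesis
  proof (rule AE_mp[OF all], rule AE_I2, intro impI)
    fix \<omega> assume \<omega>: "\<omega> \<in> space M" and h: "?c10 \<omega> \<longrightarrow> Yo \<omega> \<in> S \<and> F00 (Yo \<omega>) \<noteq> 0 \<and> F00 (Yo \<omega>) \<noteq> 1"
      and K: "G \<omega> = 1 \<and> T \<omega> = 0 \<and> Dp 0 \<omega> = d"
    have c10: "?c10 \<omega>" using K by (simp add: D_def)
    define u where "u = U d \<omega>"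
    define x where "x = h d u 1"
    have Yd: "Y d \<omega> = h d u 0" using Yh \<omega> K by (simp add: u_def)
    have Yo: "Yo \<omega> = Y d \<omega>" using c10 by (simp add: Yo_def)
    have YS: "Yo \<omega> \<in> S" and n0: "F00 (Yo \<omega>) \<noteq> 0" and n1: "F00 (Yo \<omega>) \<noteq> 1" using h c10 by auto
    have Fx: "F01 x = F00 (Yo \<omega>)" unfolding x_def Yo Yd by (rule step1)
    have F0: "0 \<le> F00 (Yo \<omega>)" unfolding F00_def by (rule ccdf_nonneg)
    have F1: "F00 (Yo \<omega>) \<le> 1" unfolding F00_def by (rule ccdf_le1) simp
    have pos: "0 < F01 x" and lt1: "F01 x < 1" using Fx F0 F1 n0 n1 by auto
    have i01: "is_interval (csupp M Yo ?c01)" using Sint s01 by simp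
    have xS: "x \<in> S"
    proof (rule ccontr)
      assume xn: "x \<notin> S"
      then have xne: "x \<noteq> Yo \<omega>" using YS by auto
      show False
      proof (cases "x < Yo \<omega>")
        case True
        have "F01 x = 0" unfolding F01_def by (rule ccdf_below[OF _ _ i01, of x "Yo \<omega>"]) (use xn YS True s01 in auto)
        then show False using pos by simp
      next
        case False
        then have "Yo \<omega> < x" using xne by simp
        have "F01 x = 1" unfolding F01_def by (rule ccdf_above[OF _ _ p01 i01, of x "Yo \<omega>"]) (use xn YS \<open>Yo \<omega> < x\<close> s01 in auto)
        then show False using lt1 by simp
      qed
    qed
    have q: "quantile F01 (F01 x) = x"
    proof (rule quantile_at[OF Sint xS m01 _ pos])
      fix y assume "y \<notin> S" "y < x"
      then show "F01 y = 0" unfolding F01_def by (intro ccdf_below[OF _ _ i01, of y x]) (use xS s01 in auto)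
    qed
    show "quantile F01 (F00 (Y d \<omega>)) = h d (U d \<omega>) 1"
      using q Fx Yo by (simp add: x_def u_def)
  qed
qed

end

context model begin

lemma part3:
  fixes h :: "nat \<Rightarrow> real \<Rightarrow> nat \<Rightarrow> real" and U :: "nat \<Rightarrow> 'a \<Rightarrow> real"
  assumes a1: "AE \<omega> in M. G \<omega> = 0 \<longrightarrow> Dp 1 \<omega> = Dp 0 \<omega>"
    and Q_def: "Q = (\<lambda>d y. quantile (ccdf M Yo (\<lambda>\<omega>. D \<omega> = d \<and> G \<omega> = 0 \<and> T \<omega> = 1))
                   (ccdf M Yo (\<lambda>\<omega>. D \<omega> = d \<and> G \<omega> = 0 \<and> T \<omega> = 0) y))"
    and pos: "\<forall>d. pr M (\<lambda>\<omega>. D \<omega> = d \<and> G \<omega> = 1 \<and> T \<omega> = 0) > 0 \<longrightarrow>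
            pr M (\<lambda>\<omega>. D \<omega> = d \<and> G \<omega> = 0 \<and> T \<omega> = 0) > 0 \<and>
            pr M (\<lambda>\<omega>. D \<omega> = d \<and> G \<omega> = 0 \<and> T \<omega> = 1) > 0"
    and Qint: "integrable M (\<lambda>\<omega>. indicator (ev M (\<lambda>\<omega>. G \<omega> = 1 \<and> T \<omega> = 0)) \<omega> * Q (D \<omega>) (Yo \<omega>))"
    and A6: "\<forall>d\<le>dbar. U d \<in> borel_measurable M
            \<and> (\<forall>\<omega>\<in>space M. Y d \<omega> = h d (U d \<omega>) (T \<omega>))
            \<and> (\<forall>t\<le>1. strict_mono (\<lambda>u. h d u t))
            \<and> (\<forall>g k. cindep M (U d) T (\<lambda>\<omega>. G \<omega> = g \<and> Dp 0 \<omega> = k))"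
    and Sint: "is_interval (csupp M Yo (\<lambda>\<omega>. True))"
    and A7: "\<forall>d g t. pr M (\<lambda>\<omega>. D \<omega> = d \<and> G \<omega> = g \<and> T \<omega> = t) > 0 \<longrightarrow>
            csupp M Yo (\<lambda>\<omega>. D \<omega> = d \<and> G \<omega> = g \<and> T \<omega> = t) = csupp M Yo (\<lambda>\<omega>. True)
            \<and> continuous_on UNIV (ccdf M Yo (\<lambda>\<omega>. D \<omega> = d \<and> G \<omega> = g \<and> T \<omega> = t))
            \<and> strict_mono_on (csupp M Yo (\<lambda>\<omega>. True))
                 (ccdf M Yo (\<lambda>\<omega>. D \<omega> = d \<and> G \<omega> = g \<and> T \<omega> = t))"
  shows "cexp M (\<lambda>\<omega>. Q (D \<omega>) (Yo \<omega>)) (\<lambda>\<omega>. G \<omega> = 1 \<and> T \<omega> = 0) = Ecell Yc 1 1"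
proof -
  let ?B = "\<lambda>\<omega>. G \<omega> = 1 \<and> T \<omega> = 0"
  let ?K = "\<lambda>d \<omega>. G \<omega> = 1 \<and> T \<omega> = 0 \<and> Dp 0 \<omega> = d"
  let ?K1 = "\<lambda>d \<omega>. G \<omega> = 1 \<and> T \<omega> = 1 \<and> Dp 0 \<omega> = d"
  let ?f = "\<lambda>\<omega>. indicator (ev M ?B) \<omega> * Q (D \<omega>) (Yo \<omega>)"
  have p10: "pr M ?B > 0" and p11: "pr M (\<lambda>\<omega>. G \<omega> = 1 \<and> T \<omega> = 1) > 0" using cell_pos by auto
  have fm: "?f \<in> borel_measurable M" using Qint by auto
  have Kf: "indicator (ev M (\<lambda>\<omega>. Dp 0 \<omega> = d)) \<omega> * ?f \<omega> = indicator (ev M (?K d)) \<omega> * Q d (Y d \<omega>)"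
    if "\<omega> \<in> space M" for d \<omega>
    using that by (auto simp: ev_def indicator_def Yo_def D_def)
  have Km: "(\<lambda>\<omega>. indicator (ev M (?K d)) \<omega> * Q d (Y d \<omega>)) \<in> borel_measurable M" for d
  proof -
    have "(\<lambda>\<omega>. indicator (ev M (\<lambda>\<omega>. Dp 0 \<omega> = d)) \<omega> * ?f \<omega>) \<in> borel_measurable M"
      using fm by measurable
    then show ?thesis by (rule measurable_cong[THEN iffD1, rotated]) (rule Kf)
  qed
  have per: "(\<integral>\<omega>. indicator (ev M (?K d)) \<omega> * Q d (Y d \<omega>) \<partial>M) / pr M ?B
      = cexp M (Y d) (?K1 d) * (pr M (?K1 d) / pr M (\<lambda>\<omega>. G \<omega> = 1 \<and> T \<omega> = 1))" if d: "d \<le> dbar" for d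
  proof (cases "pr M (?K d) = 0")
    case True
    have "pr M (?K1 d) = 0" using prop_Dp0[of 1 d] True p10 p11 by simp
    then show ?thesis using int_cexp[of "?K d" "\<lambda>\<omega>. Q d (Y d \<omega>)"] True by simp
  next
    case False
    then have pK: "pr M (?K d) > 0" using pr_nonneg[of "?K d"] by simp
    have pK1: "pr M (?K1 d) > 0"
    proof -
      have "pr M (?K1 d) / pr M (\<lambda>\<omega>. G \<omega> = 1 \<and> T \<omega> = 1) > 0" using prop_Dp0[of 1 d] pK p10 by simp
      then show ?thesis using p11 by (simp add: zero_less_divide_iff)
    qed
    have c10eq: "pr M (\<lambda>\<omega>. D \<omega> = d \<and> G \<omega> = 1 \<and> T \<omega> = 0) = pr M (?K d)"
      by (rule pr_cong) (auto simp: D_def)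
    have pc10: "pr M (\<lambda>\<omega>. D \<omega> = d \<and> G \<omega> = 1 \<and> T \<omega> = 0) > 0" using pK c10eq by simp
    then have pc00: "pr M (\<lambda>\<omega>. D \<omega> = d \<and> G \<omega> = 0 \<and> T \<omega> = 0) > 0"
      and pc01: "pr M (\<lambda>\<omega>. D \<omega> = d \<and> G \<omega> = 0 \<and> T \<omega> = 1) > 0" using pos by auto
    note A6d = A6[rule_format, OF d]
    have Um[measurable]: "U d \<in> borel_measurable M" using A6d by simp
    have hm1: "strict_mono (\<lambda>u. h d u 1)" using A6d by simp
    have hb: "(\<lambda>u. h d u 1) \<in> borel_measurable borel"
      using hm1 by (intro borel_measurable_mono) (simp add: strict_mono_mono)
    have ae: "AE \<omega> in M. ?K d \<omega> \<longrightarrow> Q d (Y d \<omega>) = h d (U d \<omega>) 1"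
      unfolding Q_def
      using cic_ae[where d=d and U=U and h=h and S="csupp M Yo (\<lambda>\<omega>. True)"] a1 pc00 pc01 pc10 Um A6d A7 Sint
      by blast
    have "(\<integral>\<omega>. indicator (ev M (?K d)) \<omega> * Q d (Y d \<omega>) \<partial>M) = (\<integral>\<omega>. indicator (ev M (?K d)) \<omega> * h d (U d \<omega>) 1 \<partial>M)"
    proof (rule integral_cong_AE[OF Km])
      show "(\<lambda>\<omega>. indicator (ev M (?K d)) \<omega> * h d (U d \<omega>) 1) \<in> borel_measurable M"
        using measurable_compose[OF Um hb] by measurable
      show "AE \<omega> in M. indicator (ev M (?K d)) \<omega> * Q d (Y d \<omega>) = indicator (ev M (?K d)) \<omega> * h d (U d \<omega>) 1"
        using ae by eventually_elim (auto simp: ev_def indicator_def)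
    qed
    also have "\<dots> = (\<integral>\<omega>. indicator (ev M (\<lambda>\<omega>. T \<omega> = 0 \<and> G \<omega> = 1 \<and> Dp 0 \<omega> = d)) \<omega> * h d (U d \<omega>) 1 \<partial>M)"
      by (intro arg_cong[where f="integral\<^sup>L M"] ext) (simp add: ev_def conj_commute conj_left_commute)
    finally have i1: "(\<integral>\<omega>. indicator (ev M (?K d)) \<omega> * Q d (Y d \<omega>) \<partial>M) = (\<integral>\<omega>. indicator (ev M (\<lambda>\<omega>. T \<omega> = 0 \<and> G \<omega> = 1 \<and> Dp 0 \<omega> = d)) \<omega> * h d (U d \<omega>) 1 \<partial>M)" .
    have tr: "(\<integral>\<omega>. indicator (ev M (\<lambda>\<omega>. T \<omega> = 0 \<and> G \<omega> = 1 \<and> Dp 0 \<omega> = d)) \<omega> * h d (U d \<omega>) 1 \<partial>M) * pr M (\<lambda>\<omega>. T \<omega> = 1 \<and> G \<omega> = 1 \<and> Dp 0 \<omega> = d)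
      = (\<integral>\<omega>. indicator (ev M (\<lambda>\<omega>. T \<omega> = 1 \<and> G \<omega> = 1 \<and> Dp 0 \<omega> = d)) \<omega> * h d (U d \<omega>) 1 \<partial>M) * pr M (\<lambda>\<omega>. T \<omega> = 0 \<and> G \<omega> = 1 \<and> Dp 0 \<omega> = d)"
      using A6d by (intro cindep_transfer[where f="\<lambda>u. h d u 1"] hb) auto
    have i2: "(\<integral>\<omega>. indicator (ev M (\<lambda>\<omega>. T \<omega> = 1 \<and> G \<omega> = 1 \<and> Dp 0 \<omega> = d)) \<omega> * h d (U d \<omega>) 1 \<partial>M)
        = cexp M (Y d) (?K1 d) * pr M (?K1 d)"
    proof -
      have "(\<integral>\<omega>. indicator (ev M (\<lambda>\<omega>. T \<omega> = 1 \<and> G \<omega> = 1 \<and> Dp 0 \<omega> = d)) \<omega> * h d (U d \<omega>) 1 \<partial>M)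
          = (\<integral>\<omega>. indicator (ev M (?K1 d)) \<omega> * Y d \<omega> \<partial>M)"
        using A6d by (intro Bochner_Integration.integral_cong refl) (auto simp: ev_def indicator_def)
      also have "\<dots> = cexp M (Y d) (?K1 d) * pr M (?K1 d)" by (rule int_cexp) simp
      finally show ?thesis .
    qed
    have pe1: "pr M (\<lambda>\<omega>. T \<omega> = 1 \<and> G \<omega> = 1 \<and> Dp 0 \<omega> = d) = pr M (?K1 d)" by (rule pr_cong) auto
    have pe0: "pr M (\<lambda>\<omega>. T \<omega> = 0 \<and> G \<omega> = 1 \<and> Dp 0 \<omega> = d) = pr M (?K d)" by (rule pr_cong) auto
    have "(\<integral>\<omega>. indicator (ev M (?K d)) \<omega> * Q d (Y d \<omega>) \<partial>M) = cexp M (Y d) (?K1 d) * pr M (?K d)"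
      using tr pK1 unfolding i1[symmetric] i2 pe1 pe0 by (simp add: field_simps)
    then show ?thesis using prop_Dp0[of 1 d] by (simp add: field_simps)
  qed
  have "(\<integral>\<omega>. ?f \<omega> \<partial>M) = (\<integral>\<omega>. (\<Sum>d\<in>{..dbar}. indicator (ev M (\<lambda>\<omega>. Dp 0 \<omega> = d)) \<omega> * ?f \<omega>) \<partial>M)"
  proof (rule Bochner_Integration.integral_cong[OF refl])
    fix \<omega> assume \<omega>: "\<omega> \<in> space M"
    have "(\<Sum>d\<in>{..dbar}. indicator (ev M (\<lambda>\<omega>. Dp 0 \<omega> = d)) \<omega> * ?f \<omega>) = (\<Sum>d\<in>{..dbar}. if d = Dp 0 \<omega> then ?f \<omega> else 0)"
      using \<omega> by (intro sum.cong refl) (auto simp: ev_def indicator_def)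
    also have "\<dots> = ?f \<omega>" using Dp_le[of 0 \<omega>] by (simp add: sum.delta)
    finally show "?f \<omega> = (\<Sum>d\<in>{..dbar}. indicator (ev M (\<lambda>\<omega>. Dp 0 \<omega> = d)) \<omega> * ?f \<omega>)" by simp
  qed
  also have "\<dots> = (\<Sum>d\<in>{..dbar}. (\<integral>\<omega>. indicator (ev M (\<lambda>\<omega>. Dp 0 \<omega> = d)) \<omega> * ?f \<omega> \<partial>M))"
    by (rule Bochner_Integration.integral_sum) (rule int_ind_mult, simp, rule Qint)
  also have "\<dots> = (\<Sum>d\<in>{..dbar}. (\<integral>\<omega>. indicator (ev M (?K d)) \<omega> * Q d (Y d \<omega>) \<partial>M))"
    by (intro sum.cong refl Bochner_Integration.integral_cong) (rule Kf)
  finally have sumI: "(\<integral>\<omega>. ?f \<omega> \<partial>M) = (\<Sum>d\<in>{..dbar}. (\<integral>\<omega>. indicator (ev M (?K d)) \<omega> * Q d (Y d \<omega>) \<partial>M))" .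
  have "cexp M (\<lambda>\<omega>. Q (D \<omega>) (Yo \<omega>)) ?B = (\<Sum>d\<in>{..dbar}. (\<integral>\<omega>. indicator (ev M (?K d)) \<omega> * Q d (Y d \<omega>) \<partial>M) / pr M ?B)"
    unfolding cexp_def by (simp only: sumI sum_divide_distrib)
  also have "\<dots> = (\<Sum>d\<in>{..dbar}. cexp M (Y d) (?K1 d) * (pr M (?K1 d) / pr M (\<lambda>\<omega>. G \<omega> = 1 \<and> T \<omega> = 1)))"
    by (intro sum.cong refl per) simp
  also have "\<dots> = Ecell Yc 1 1"
    unfolding Yc_def by (rule decomp[symmetric]) (use Y_int in auto)
  finally show ?thesis .
qed

end

context model begin

lemma final:
  fixes h :: "nat \<Rightarrow> real \<Rightarrow> nat \<Rightarrow> real"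
    and U :: "nat \<Rightarrow> 'a \<Rightarrow> real"
  defines "E \<equiv> \<lambda>X g t. cexp M X (\<lambda>\<omega>. G \<omega> = g \<and> T \<omega> = t)"
    and "ED \<equiv> \<lambda>g t. cexp M (\<lambda>\<omega>. real (D \<omega>)) (\<lambda>\<omega>. G \<omega> = g \<and> T \<omega> = t)"
  defines "DID \<equiv> \<lambda>X. E X 1 1 - E X 1 0 - (E X 0 1 - E X 0 0)"
  defines "W_DID \<equiv> DID Yo / DID (\<lambda>\<omega>. real (D \<omega>))"
  defines "\<delta> \<equiv> \<lambda>d. cexp M Yo (\<lambda>\<omega>. D \<omega> = d \<and> G \<omega> = 0 \<and> T \<omega> = 1)
                 - cexp M Yo (\<lambda>\<omega>. D \<omega> = d \<and> G \<omega> = 0 \<and> T \<omega> = 0)"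
    and "Q \<equiv> \<lambda>d y. quantile (ccdf M Yo (\<lambda>\<omega>. D \<omega> = d \<and> G \<omega> = 0 \<and> T \<omega> = 1))
                   (ccdf M Yo (\<lambda>\<omega>. D \<omega> = d \<and> G \<omega> = 0 \<and> T \<omega> = 0) y)"
    and "w \<equiv> \<lambda>d. (cprob M (\<lambda>\<omega>. d \<le> D \<omega>) (\<lambda>\<omega>. G \<omega> = 1 \<and> T \<omega> = 1)
                 - cprob M (\<lambda>\<omega>. d \<le> D \<omega>) (\<lambda>\<omega>. G \<omega> = 1 \<and> T \<omega> = 0)) / (ED 1 1 - ED 1 0)"
  defines "W_TC \<equiv> (E Yo 1 1 - cexp M (\<lambda>\<omega>. Yo \<omega> + \<delta> (D \<omega>)) (\<lambda>\<omega>. G \<omega> = 1 \<and> T \<omega> = 0))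
                  / (ED 1 1 - ED 1 0)"
  defines "W_CIC \<equiv> (E Yo 1 1 - cexp M (\<lambda>\<omega>. Q (D \<omega>) (Yo \<omega>)) (\<lambda>\<omega>. G \<omega> = 1 \<and> T \<omega> = 0))
                  / (ED 1 1 - ED 1 0)"
    and "ACR \<equiv> \<Sum>d\<in>{1..dbar}. w d * cexp M (\<lambda>\<omega>. Y d \<omega> - Y (d - 1) \<omega>)
                  (\<lambda>\<omega>. Dp 0 \<omega> < d \<and> d \<le> Dp 1 \<omega> \<and> G \<omega> = 1 \<and> T \<omega> = 1)"
  assumes D0_same: "\<forall>k. cprob M (\<lambda>\<omega>. D \<omega> = k) (\<lambda>\<omega>. G \<omega> = 0 \<and> T \<omega> = 1)
                     = cprob M (\<lambda>\<omega>. D \<omega> = k) (\<lambda>\<omega>. G \<omega> = 0 \<and> T \<omega> = 0)"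
    and dominance: "\<forall>d. cprob M (\<lambda>\<omega>. d \<le> D \<omega>) (\<lambda>\<omega>. G \<omega> = 1 \<and> T \<omega> = 1)
                     \<ge> cprob M (\<lambda>\<omega>. d \<le> D \<omega>) (\<lambda>\<omega>. G \<omega> = 1 \<and> T \<omega> = 0)"
  shows
    "((E (Y 0) 1 1 - E (Y 0) 1 0 = E (Y 0) 0 1 - E (Y 0) 0 0)
       \<and> (\<forall>d\<le>dbar. \<forall>g\<le>1.
            cexp M (\<lambda>\<omega>. Y d \<omega> - Y 0 \<omega>) (\<lambda>\<omega>. G \<omega> = g \<and> T \<omega> = 1 \<and> Dp 0 \<omega> = d)
          = cexp M (\<lambda>\<omega>. Y d \<omega> - Y 0 \<omega>) (\<lambda>\<omega>. G \<omega> = g \<and> T \<omega> = 0 \<and> Dp 0 \<omega> = d))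
       \<longrightarrow> W_DID = ACR)
   \<and> ((\<forall>d. pr M (\<lambda>\<omega>. D \<omega> = d \<and> G \<omega> = 1 \<and> T \<omega> = 0) > 0 \<longrightarrow>
            pr M (\<lambda>\<omega>. D \<omega> = d \<and> G \<omega> = 0 \<and> T \<omega> = 0) > 0 \<and>
            pr M (\<lambda>\<omega>. D \<omega> = d \<and> G \<omega> = 0 \<and> T \<omega> = 1) > 0)
       \<and> (\<forall>d\<le>dbar.
            cexp M (Y d) (\<lambda>\<omega>. G \<omega> = 1 \<and> T \<omega> = 1 \<and> Dp 0 \<omega> = d)
            - cexp M (Y d) (\<lambda>\<omega>. G \<omega> = 1 \<and> T \<omega> = 0 \<and> Dp 0 \<omega> = d)
          = cexp M (Y d) (\<lambda>\<omega>. G \<omega> = 0 \<and> T \<omega> = 1 \<and> Dp 0 \<omega> = d)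
            - cexp M (Y d) (\<lambda>\<omega>. G \<omega> = 0 \<and> T \<omega> = 0 \<and> Dp 0 \<omega> = d))
       \<longrightarrow> W_TC = ACR)
   \<and> ((\<forall>d. pr M (\<lambda>\<omega>. D \<omega> = d \<and> G \<omega> = 1 \<and> T \<omega> = 0) > 0 \<longrightarrow>
            pr M (\<lambda>\<omega>. D \<omega> = d \<and> G \<omega> = 0 \<and> T \<omega> = 0) > 0 \<and>
            pr M (\<lambda>\<omega>. D \<omega> = d \<and> G \<omega> = 0 \<and> T \<omega> = 1) > 0)
       \<and> integrable M (\<lambda>\<omega>. indicator (ev M (\<lambda>\<omega>. G \<omega> = 1 \<and> T \<omega> = 0)) \<omega> * Q (D \<omega>) (Yo \<omega>))
       \<and> (\<forall>d\<le>dbar. U d \<in> borel_measurable M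
            \<and> (\<forall>\<omega>\<in>space M. Y d \<omega> = h d (U d \<omega>) (T \<omega>))
            \<and> (\<forall>t\<le>1. strict_mono (\<lambda>u. h d u t))
            \<and> (\<forall>g k. cindep M (U d) T (\<lambda>\<omega>. G \<omega> = g \<and> Dp 0 \<omega> = k)))
       \<and> closed (csupp M Yo (\<lambda>\<omega>. True)) \<and> is_interval (csupp M Yo (\<lambda>\<omega>. True))
       \<and> (\<forall>d g t. pr M (\<lambda>\<omega>. D \<omega> = d \<and> G \<omega> = g \<and> T \<omega> = t) > 0 \<longrightarrow>
            csupp M Yo (\<lambda>\<omega>. D \<omega> = d \<and> G \<omega> = g \<and> T \<omega> = t) = csupp M Yo (\<lambda>\<omega>. True)
            \<and> continuous_on UNIV (ccdf M Yo (\<lambda>\<omega>. D \<omega> = d \<and> G \<omega> = g \<and> T \<omega> = t))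
            \<and> strict_mono_on (csupp M Yo (\<lambda>\<omega>. True))
                 (ccdf M Yo (\<lambda>\<omega>. D \<omega> = d \<and> G \<omega> = g \<and> T \<omega> = t)))
       \<longrightarrow> W_CIC = ACR)"
proof -
  have a1: "AE \<omega> in M. G \<omega> = 0 \<longrightarrow> Dp 1 \<omega> = Dp 0 \<omega>" by (rule A1[OF D0_same])
  have a2: "AE \<omega> in M. G \<omega> = 1 \<longrightarrow> Dp 0 \<omega> \<le> Dp 1 \<omega>" by (rule A2[OF dominance])
  have E_eq: "E X g t = Ecell X g t" for X g t by (simp add: E_def Ecell_def)
  define den where "den = ED 1 1 - ED 1 0"
  have den_eq: "den = (\<Sum>d\<in>{1..dbar}. diffw d)"
    unfolding den_def ED_def diffw_def by (simp add: ED_sum sum_subtractf)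
  have EDt: "ED 0 t = (\<Sum>d\<in>{1..dbar}. \<Sum>k\<in>{d..dbar}. cprob M (\<lambda>\<omega>. D \<omega> = k) (\<lambda>\<omega>. G \<omega> = 0 \<and> T \<omega> = t))" for t
    unfolding ED_def by (simp add: ED_sum cprob_ge_sum)
  have ED0: "ED 0 1 = ED 0 0"
    by (simp only: EDt D0_same[rule_format])
  have ACR_eq: "ACR = (\<Sum>d\<in>{1..dbar}. diffw d * cd d) / den"
    unfolding ACR_def w_def den_def[symmetric] cd_def[symmetric] diffw_def[symmetric]
    by (simp add: sum_divide_distrib)
  have core': "E Yo 1 1 - Ecell Yc 1 1 = (\<Sum>d\<in>{1..dbar}. diffw d * cd d)"
    using core[OF a2] by (simp add: E_eq)
  have P1: "W_DID = ACR"
    if A3: "E (Y 0) 1 1 - E (Y 0) 1 0 = E (Y 0) 0 1 - E (Y 0) 0 0"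
      and A4: "\<forall>d\<le>dbar. \<forall>g\<le>1.
            cexp M (\<lambda>\<omega>. Y d \<omega> - Y 0 \<omega>) (\<lambda>\<omega>. G \<omega> = g \<and> T \<omega> = 1 \<and> Dp 0 \<omega> = d)
          = cexp M (\<lambda>\<omega>. Y d \<omega> - Y 0 \<omega>) (\<lambda>\<omega>. G \<omega> = g \<and> T \<omega> = 0 \<and> Dp 0 \<omega> = d)"
  proof -
    have "DID Yo = (\<Sum>d\<in>{1..dbar}. diffw d * cd d)"
      unfolding DID_def E_eq by (rule part1[OF a1 a2 _ A4]) (use A3 in \<open>simp add: E_eq\<close>)
    moreover have "DID (\<lambda>\<omega>. real (D \<omega>)) = den"
      unfolding DID_def den_def using ED0 by (simp add: E_def ED_def)
    ultimately show ?thesis unfolding W_DID_def ACR_eq by simp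
  qed
  have P2: "W_TC = ACR"
    if A3': "\<forall>d\<le>dbar.
            cexp M (Y d) (\<lambda>\<omega>. G \<omega> = 1 \<and> T \<omega> = 1 \<and> Dp 0 \<omega> = d)
            - cexp M (Y d) (\<lambda>\<omega>. G \<omega> = 1 \<and> T \<omega> = 0 \<and> Dp 0 \<omega> = d)
          = cexp M (Y d) (\<lambda>\<omega>. G \<omega> = 0 \<and> T \<omega> = 1 \<and> Dp 0 \<omega> = d)
            - cexp M (Y d) (\<lambda>\<omega>. G \<omega> = 0 \<and> T \<omega> = 0 \<and> Dp 0 \<omega> = d)"
  proof -
    have "cexp M (\<lambda>\<omega>. Yo \<omega> + \<delta> (D \<omega>)) (\<lambda>\<omega>. G \<omega> = 1 \<and> T \<omega> = 0) = Ecell Yc 1 1"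
      by (rule part2[OF a1 A3']) (simp add: \<delta>_def)
    then show ?thesis unfolding W_TC_def ACR_eq den_def[symmetric] core'[symmetric] by simp
  qed
  have P3: "W_CIC = ACR"
    if pos: "\<forall>d. pr M (\<lambda>\<omega>. D \<omega> = d \<and> G \<omega> = 1 \<and> T \<omega> = 0) > 0 \<longrightarrow>
            pr M (\<lambda>\<omega>. D \<omega> = d \<and> G \<omega> = 0 \<and> T \<omega> = 0) > 0 \<and>
            pr M (\<lambda>\<omega>. D \<omega> = d \<and> G \<omega> = 0 \<and> T \<omega> = 1) > 0"
    and Qint: "integrable M (\<lambda>\<omega>. indicator (ev M (\<lambda>\<omega>. G \<omega> = 1 \<and> T \<omega> = 0)) \<omega> * Q (D \<omega>) (Yo \<omega>))"
    and A6: "\<forall>d\<le>dbar. U d \<in> borel_measurable M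
            \<and> (\<forall>\<omega>\<in>space M. Y d \<omega> = h d (U d \<omega>) (T \<omega>))
            \<and> (\<forall>t\<le>1. strict_mono (\<lambda>u. h d u t))
            \<and> (\<forall>g k. cindep M (U d) T (\<lambda>\<omega>. G \<omega> = g \<and> Dp 0 \<omega> = k))"
    and Sint: "is_interval (csupp M Yo (\<lambda>\<omega>. True))"
    and A7: "\<forall>d g t. pr M (\<lambda>\<omega>. D \<omega> = d \<and> G \<omega> = g \<and> T \<omega> = t) > 0 \<longrightarrow>
            csupp M Yo (\<lambda>\<omega>. D \<omega> = d \<and> G \<omega> = g \<and> T \<omega> = t) = csupp M Yo (\<lambda>\<omega>. True)
            \<and> continuous_on UNIV (ccdf M Yo (\<lambda>\<omega>. D \<omega> = d \<and> G \<omega> = g \<and> T \<omega> = t))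
            \<and> strict_mono_on (csupp M Yo (\<lambda>\<omega>. True))
                 (ccdf M Yo (\<lambda>\<omega>. D \<omega> = d \<and> G \<omega> = g \<and> T \<omega> = t))"
  proof -
    have "cexp M (\<lambda>\<omega>. Q (D \<omega>) (Yo \<omega>)) (\<lambda>\<omega>. G \<omega> = 1 \<and> T \<omega> = 0) = Ecell Yc 1 1"
      by (rule part3[OF a1 _ pos Qint A6 Sint A7]) (simp add: Q_def)
    then show ?thesis unfolding W_CIC_def ACR_eq den_def[symmetric] core'[symmetric] by simp
  qed
  show ?thesis using P1 P2 P3 by blast
qed

end

theorem theorem5:
  fixes M :: "'a measure"
    and Y :: "nat \<Rightarrow> 'a \<Rightarrow> real"
    and V :: "'a \<Rightarrow> real"
    and G T :: "'a \<Rightarrow> nat"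
    and v :: "nat \<Rightarrow> nat \<Rightarrow> nat \<Rightarrow> real"
    and dbar :: nat
    and h :: "nat \<Rightarrow> real \<Rightarrow> nat \<Rightarrow> real"
    and U :: "nat \<Rightarrow> 'a \<Rightarrow> real"
  defines "Dp \<equiv> \<lambda>t \<omega>. (\<Sum>d\<in>{1..dbar}. if v d (G \<omega>) t \<le> V \<omega> then 1 else 0) :: nat"
  defines "D \<equiv> \<lambda>\<omega>. Dp (T \<omega>) \<omega>"
  defines "Yo \<equiv> \<lambda>\<omega>. Y (D \<omega>) \<omega>"
    and "E \<equiv> \<lambda>X g t. cexp M X (\<lambda>\<omega>. G \<omega> = g \<and> T \<omega> = t)"
    and "ED \<equiv> \<lambda>g t. cexp M (\<lambda>\<omega>. real (D \<omega>)) (\<lambda>\<omega>. G \<omega> = g \<and> T \<omega> = t)"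
  defines "DID \<equiv> \<lambda>X. E X 1 1 - E X 1 0 - (E X 0 1 - E X 0 0)"
  defines "W_DID \<equiv> DID Yo / DID (\<lambda>\<omega>. real (D \<omega>))"
  defines "\<delta> \<equiv> \<lambda>d. cexp M Yo (\<lambda>\<omega>. D \<omega> = d \<and> G \<omega> = 0 \<and> T \<omega> = 1)
                 - cexp M Yo (\<lambda>\<omega>. D \<omega> = d \<and> G \<omega> = 0 \<and> T \<omega> = 0)"
    and "Q \<equiv> \<lambda>d y. quantile (ccdf M Yo (\<lambda>\<omega>. D \<omega> = d \<and> G \<omega> = 0 \<and> T \<omega> = 1))
                   (ccdf M Yo (\<lambda>\<omega>. D \<omega> = d \<and> G \<omega> = 0 \<and> T \<omega> = 0) y)"
    and "w \<equiv> \<lambda>d. (cprob M (\<lambda>\<omega>. d \<le> D \<omega>) (\<lambda>\<omega>. G \<omega> = 1 \<and> T \<omega> = 1)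
                 - cprob M (\<lambda>\<omega>. d \<le> D \<omega>) (\<lambda>\<omega>. G \<omega> = 1 \<and> T \<omega> = 0)) / (ED 1 1 - ED 1 0)"
  defines "W_TC \<equiv> (E Yo 1 1 - cexp M (\<lambda>\<omega>. Yo \<omega> + \<delta> (D \<omega>)) (\<lambda>\<omega>. G \<omega> = 1 \<and> T \<omega> = 0))
                  / (ED 1 1 - ED 1 0)"
  defines "W_CIC \<equiv> (E Yo 1 1 - cexp M (\<lambda>\<omega>. Q (D \<omega>) (Yo \<omega>)) (\<lambda>\<omega>. G \<omega> = 1 \<and> T \<omega> = 0))
                  / (ED 1 1 - ED 1 0)"
    and "ACR \<equiv> \<Sum>d\<in>{1..dbar}. w d * cexp M (\<lambda>\<omega>. Y d \<omega> - Y (d - 1) \<omega>)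
                  (\<lambda>\<omega>. Dp 0 \<omega> < d \<and> d \<le> Dp 1 \<omega> \<and> G \<omega> = 1 \<and> T \<omega> = 1)"
  assumes M: "prob_space M"
    and G_meas: "G \<in> measurable M (count_space UNIV)"
    and T_meas: "T \<in> measurable M (count_space UNIV)"
    and G01: "\<forall>\<omega>\<in>space M. G \<omega> \<le> 1"
    and T01: "\<forall>\<omega>\<in>space M. T \<omega> \<le> 1"
    and V_meas: "V \<in> borel_measurable M"
    and Y_int: "\<forall>d\<le>dbar. integrable M (Y d)"
    and cells_pos: "\<forall>g\<le>1. \<forall>t\<le>1. pr M (\<lambda>\<omega>. G \<omega> = g \<and> T \<omega> = t) > 0"
    and v_mono: "\<forall>g t d. 1 \<le> d \<and> d < dbar \<longrightarrow> v d g t < v (Suc d) g t"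
    and V_T_indep: "\<forall>g. cindep M V T (\<lambda>\<omega>. G \<omega> = g)"
    and first_stage1: "ED 1 1 - ED 1 0 > ED 0 1 - ED 0 0"
    and first_stage2: "ED 1 1 > ED 1 0"
    and D0_same: "\<forall>k. cprob M (\<lambda>\<omega>. D \<omega> = k) (\<lambda>\<omega>. G \<omega> = 0 \<and> T \<omega> = 1)
                     = cprob M (\<lambda>\<omega>. D \<omega> = k) (\<lambda>\<omega>. G \<omega> = 0 \<and> T \<omega> = 0)"
    and dominance: "\<forall>d. cprob M (\<lambda>\<omega>. d \<le> D \<omega>) (\<lambda>\<omega>. G \<omega> = 1 \<and> T \<omega> = 1)
                     \<ge> cprob M (\<lambda>\<omega>. d \<le> D \<omega>) (\<lambda>\<omega>. G \<omega> = 1 \<and> T \<omega> = 0)"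
  shows
    "((E (Y 0) 1 1 - E (Y 0) 1 0 = E (Y 0) 0 1 - E (Y 0) 0 0)
       \<and> (\<forall>d\<le>dbar. \<forall>g\<le>1.
            cexp M (\<lambda>\<omega>. Y d \<omega> - Y 0 \<omega>) (\<lambda>\<omega>. G \<omega> = g \<and> T \<omega> = 1 \<and> Dp 0 \<omega> = d)
          = cexp M (\<lambda>\<omega>. Y d \<omega> - Y 0 \<omega>) (\<lambda>\<omega>. G \<omega> = g \<and> T \<omega> = 0 \<and> Dp 0 \<omega> = d))
       \<longrightarrow> W_DID = ACR)
   \<and> ((\<forall>d. pr M (\<lambda>\<omega>. D \<omega> = d \<and> G \<omega> = 1 \<and> T \<omega> = 0) > 0 \<longrightarrow>
            pr M (\<lambda>\<omega>. D \<omega> = d \<and> G \<omega> = 0 \<and> T \<omega> = 0) > 0 \<and>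
            pr M (\<lambda>\<omega>. D \<omega> = d \<and> G \<omega> = 0 \<and> T \<omega> = 1) > 0)
       \<and> (\<forall>d\<le>dbar.
            cexp M (Y d) (\<lambda>\<omega>. G \<omega> = 1 \<and> T \<omega> = 1 \<and> Dp 0 \<omega> = d)
            - cexp M (Y d) (\<lambda>\<omega>. G \<omega> = 1 \<and> T \<omega> = 0 \<and> Dp 0 \<omega> = d)
          = cexp M (Y d) (\<lambda>\<omega>. G \<omega> = 0 \<and> T \<omega> = 1 \<and> Dp 0 \<omega> = d)
            - cexp M (Y d) (\<lambda>\<omega>. G \<omega> = 0 \<and> T \<omega> = 0 \<and> Dp 0 \<omega> = d))
       \<longrightarrow> W_TC = ACR)
   \<and> ((\<forall>d. pr M (\<lambda>\<omega>. D \<omega> = d \<and> G \<omega> = 1 \<and> T \<omega> = 0) > 0 \<longrightarrow>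
            pr M (\<lambda>\<omega>. D \<omega> = d \<and> G \<omega> = 0 \<and> T \<omega> = 0) > 0 \<and>
            pr M (\<lambda>\<omega>. D \<omega> = d \<and> G \<omega> = 0 \<and> T \<omega> = 1) > 0)
       \<and> integrable M (\<lambda>\<omega>. indicator (ev M (\<lambda>\<omega>. G \<omega> = 1 \<and> T \<omega> = 0)) \<omega> * Q (D \<omega>) (Yo \<omega>))
       \<comment> \<open>Assumption 6\<close>
       \<and> (\<forall>d\<le>dbar. U d \<in> borel_measurable M
            \<and> (\<forall>\<omega>\<in>space M. Y d \<omega> = h d (U d \<omega>) (T \<omega>))
            \<and> (\<forall>t\<le>1. strict_mono (\<lambda>u. h d u t))
            \<and> (\<forall>g k. cindep M (U d) T (\<lambda>\<omega>. G \<omega> = g \<and> Dp 0 \<omega> = k)))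
       \<comment> \<open>Assumption 7\<close>
       \<and> closed (csupp M Yo (\<lambda>\<omega>. True)) \<and> is_interval (csupp M Yo (\<lambda>\<omega>. True))
       \<and> (\<forall>d g t. pr M (\<lambda>\<omega>. D \<omega> = d \<and> G \<omega> = g \<and> T \<omega> = t) > 0 \<longrightarrow>
            csupp M Yo (\<lambda>\<omega>. D \<omega> = d \<and> G \<omega> = g \<and> T \<omega> = t) = csupp M Yo (\<lambda>\<omega>. True)
            \<and> continuous_on UNIV (ccdf M Yo (\<lambda>\<omega>. D \<omega> = d \<and> G \<omega> = g \<and> T \<omega> = t))
            \<and> strict_mono_on (csupp M Yo (\<lambda>\<omega>. True))
                 (ccdf M Yo (\<lambda>\<omega>. D \<omega> = d \<and> G \<omega> = g \<and> T \<omega> = t)))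
       \<longrightarrow> W_CIC = ACR)"
proof -
  interpret L: model M Y V G T v dbar
    using M G_meas T_meas G01 T01 V_meas Y_int cells_pos v_mono V_T_indep
    by (intro model.intro model_axioms.intro) auto
  have Dp_eq: "Dp = L.Dp" unfolding Dp_def by (intro ext) (simp add: L.Dp_def)
  have D_eq: "D = L.D" unfolding D_def Dp_eq by (intro ext) (simp add: L.D_def)
  have Yo_eq: "Yo = L.Yo" unfolding Yo_def D_eq by (intro ext) (simp add: L.Yo_def)
  show ?thesis
    using L.final[where h=h and U=U, OF D0_same[unfolded D_eq] dominance[unfolded D_eq]]
    unfolding W_DID_def W_TC_def W_CIC_def ACR_def DID_def \<delta>_def Q_def w_def E_def ED_def Yo_eq D_eq Dp_eq .
qed

end
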